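(* Consider the distributed Lion algorithm Dis-Lion (v1) (defined in the context) under Assumptions (D1) and (D3), with $\beta_1,\beta_2\in(0,1]$, $\beta_2^2\le\beta_1\le\sqrt{\beta_2}$, $\eta>0$, $0\le\lambda\le\frac1{2\eta T}$ and $\|\mathbf{x}_1\|_\infty\le\eta$. Then $$\mathbb{E}\left[\frac1T\sum_{t=1}^T\Big\|\frac1n\sum_{j=1}^n\mathbf{v}_t^j-\nabla f(\mathbf{x}_t)\Big\|^2\right]\le\frac{2\sigma^2}{\beta_2nT}+\frac{16\eta^2L^2d}{\beta_2^2}+\frac{2\beta_2\sigma^2}{n}.$$
   Context: Distributed setting: $n$ nodes; $f(\mathbf{x})=\frac1n\sum_{j=1}^nf_j(\mathbf{x})$ with $f_j(\mathbf{x})=\mathbb{E}_{\xi^j\sim\mathcal{D}_j}[f_j(\mathbf{x};\xi^j)]$, where the distributions $\mathcal{D}_j$ may differ. Node $j$ draws samples $\xi^j\sim\mathcal{D}_j$, independent across nodes and time and of everything before, and can evaluate $\nabla f_j(\mathbf{x};\xi^j)$. $\|\cdot\|$ is the Euclidean norm; $\operatorname{sign}$ acts coordinatewise with values in $\{-1,0,1\}$. (D1) each $f_j$ is $L$-smooth: $\|\nabla f_j(\mathbf{x})-\nabla f_j(\mathbf{y})\|\le L\|\mathbf{x}-\mathbf{y}\|$. (D3) $\mathbb{E}_{\xi}[\nabla f_j(\mathbf{x};\xi)]=\nabla f_j(\mathbf{x})$ and $\mathbb{E}_\xi\|\nabla f_j(\mathbf{x};\xi)-\nabla f_j(\mathbf{x})\|^2\le\sigma^2$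 for all $j,\mathbf{x}$. Dis-Lion (v1): given $\mathbf{x}_1$, $\beta_1,\beta_2,\eta,\lambda$. At $t=1$ each node sets $\mathbf{v}_1^j=\mathbf{m}_1^j=\nabla f_j(\mathbf{x}_1;\xi_1^j)$. For $t\ge2$ each node draws a fresh $\xi_t^j$ and sets $\mathbf{v}_t^j=(1-\beta_1)\mathbf{m}_{t-1}^j+\beta_1\nabla f_j(\mathbf{x}_t;\xi_t^j)$, $\mathbf{m}_t^j=(1-\beta_2)\mathbf{m}_{t-1}^j+\beta_2\nabla f_j(\mathbf{x}_t;\xi_t^j)$. The server forms $\mathbf{v}_t=\sum_{j=1}^n\mathbf{v}_t^j$, and all nodes update $\mathbf{x}_{t+1}=\mathbf{x}_t-\eta(\operatorname{sign}(\mathbf{v}_t)+\lambda\mathbf{x}_t)$. *)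

theory Defs
  imports "HOL-Probability.Probability"
begin

definition vsign :: "real^'d \<Rightarrow> real^'d" where
  "vsign v = (\<chi> i. sgn (v $ i))"

text \<open>G j x s  : stochastic gradient of node j at point x with sample s.
  xi t j   : sample drawn by node j at time t (t \<ge> 1, j \<in> {1..n}).
  dlion_state ... t = (x_{t+1}, m_t, v_t) for t \<ge> 1 ; dlion_state ... 0 = (x_1, 0, 0).\<close>
fun dlion_state ::
  "(nat \<Rightarrow> real^'d \<Rightarrow> 's \<Rightarrow> real^'d) \<Rightarrow> (nat \<Rightarrow> nat \<Rightarrow> 's) \<Rightarrow> nat \<Rightarrow>
   real \<Rightarrow> real \<Rightarrow> real \<Rightarrow> real \<Rightarrow> real^'d \<Rightarrow> nat \<Rightarrow>
   (real^'d) \<times> (nat \<Rightarrow> real^'d) \<times> (nat \<Rightarrow> real^'d)" where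
  "dlion_state G xi n b1 b2 eta lam x1 0 = (x1, (\<lambda>j. 0), (\<lambda>j. 0))"
| "dlion_state G xi n b1 b2 eta lam x1 (Suc t) =
     (let (x, m, _) = dlion_state G xi n b1 b2 eta lam x1 t;
          g = (\<lambda>j. G j x (xi (Suc t) j));
          v = (if t = 0 then g else (\<lambda>j. (1 - b1) *\<^sub>R m j + b1 *\<^sub>R g j));
          m' = (if t = 0 then g else (\<lambda>j. (1 - b2) *\<^sub>R m j + b2 *\<^sub>R g j));
          vs = (\<Sum>j\<in>{1..n}. v j)
      in (x - eta *\<^sub>R (vsign vs + lam *\<^sub>R x), m', v))"

definition dlion_x where
  "dlion_x G xi n b1 b2 eta lam x1 t = fst (dlion_state G xi n b1 b2 eta lam x1 (t - 1))"

definition dlion_v where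
  "dlion_v G xi n b1 b2 eta lam x1 t j = snd (snd (dlion_state G xi n b1 b2 eta lam x1 t)) j"

end

theory Submission
  imports Defs
begin

lemma one_step:
  fixes e :: "'s \<Rightarrow> real^'d"
  assumes P: "prob_space P" and ie: "integrable P e" and m0: "(\<integral>y. e y \<partial>P) = 0"
  shows "(\<integral>\<^sup>+y. ennreal ((norm (a + c *\<^sub>R e y))\<^sup>2) \<partial>P)
         \<le> ennreal ((norm a)\<^sup>2) + ennreal (c\<^sup>2) * (\<integral>\<^sup>+y. ennreal ((norm (e y))\<^sup>2) \<partial>P)"
proof -
  interpret prob_space P by fact
  have em[measurable]: "e \<in> borel_measurable P" using ie by auto
  show ?thesis
  proof (cases "c = 0")
    case True
    then show ?thesis by (simp add: emeasure_space_1)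
  next
    case cne: False
    show ?thesis
    proof (cases "(\<integral>\<^sup>+y. ennreal ((norm (e y))\<^sup>2) \<partial>P) = \<infinity>")
      case True
      have "ennreal (c\<^sup>2) * \<infinity> = \<infinity>" using cne by (simp add: ennreal_mult_top)
      then show ?thesis using True by simp
    next
      case False
      then obtain r where r: "(\<integral>\<^sup>+y. ennreal ((norm (e y))\<^sup>2) \<partial>P) = ennreal r" "r \<ge> 0"
        using less_top ennreal_cases by (metis ennreal_less_zero_iff infinity_ennreal_def not_less)
      have ie2: "integrable P (\<lambda>y. (norm (e y))\<^sup>2)"
        by (rule integrableI_nn_integral_finite[OF _ _ r(1)]) auto
      have ir: "r = (\<integral>y. (norm (e y))\<^sup>2 \<partial>P)"
      proof -
        have "(\<integral>\<^sup>+y. ennreal ((norm (e y))\<^sup>2) \<partial>P) = ennreal (\<integral>y. (norm (e y))\<^sup>2 \<partial>P)"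
          by (rule nn_integral_eq_integral[OF ie2]) auto
        then show ?thesis using r by (simp add: integral_nonneg_AE)
      qed
      have eq: "\<And>y. (norm (a + c *\<^sub>R e y))\<^sup>2 = (norm a)\<^sup>2 + 2 * c * (a \<bullet> e y) + c\<^sup>2 * (norm (e y))\<^sup>2"
        unfolding power2_norm_eq_inner by (simp add: inner_add_left inner_add_right inner_commute algebra_simps power2_eq_square)
      have ih: "integrable P (\<lambda>y. (norm a)\<^sup>2 + 2 * c * (a \<bullet> e y) + c\<^sup>2 * (norm (e y))\<^sup>2)"
        using ie ie2 by auto
      have "(\<integral>\<^sup>+y. ennreal ((norm (a + c *\<^sub>R e y))\<^sup>2) \<partial>P)
          = ennreal (\<integral>y. (norm a)\<^sup>2 + 2 * c * (a \<bullet> e y) + c\<^sup>2 * (norm (e y))\<^sup>2 \<partial>P)"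
        unfolding eq by (rule nn_integral_eq_integral[OF ih]) (auto simp: eq[symmetric])
      also have "(\<integral>y. (norm a)\<^sup>2 + 2 * c * (a \<bullet> e y) + c\<^sup>2 * (norm (e y))\<^sup>2 \<partial>P)
          = (norm a)\<^sup>2 + c\<^sup>2 * r"
        using ie ie2 m0 ir by (simp add: prob_space)
      also have "ennreal ((norm a)\<^sup>2 + c\<^sup>2 * r) = ennreal ((norm a)\<^sup>2) + ennreal (c\<^sup>2) * ennreal r"
        using r(2) by (simp add: ennreal_plus ennreal_mult)
      finally show ?thesis using r by simp
    qed
  qed
qed

lemma noise_sum:
  fixes Mi :: "'i \<Rightarrow> 's measure" and idx :: "nat \<Rightarrow> 'i" and e :: "nat \<Rightarrow> ('i \<Rightarrow> 's) \<Rightarrow> real^'d"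
  assumes prob: "\<And>i. prob_space (Mi i)"
  and inj: "inj idx"
  and meas: "\<And>k m. k < m \<Longrightarrow> m \<le> Kmax \<Longrightarrow> e k \<in> borel_measurable (PiM (idx ` {..<m}) Mi)"
  and dep: "\<And>k w w'. (\<And>l. l \<le> k \<Longrightarrow> w (idx l) = w' (idx l)) \<Longrightarrow> e k w = e k w'"
  and int: "\<And>k w. k < Kmax \<Longrightarrow> w \<in> space (PiM (idx ` {..<k}) Mi) \<Longrightarrow> integrable (Mi (idx k)) (\<lambda>y. e k (w(idx k := y)))"
  and mean0: "\<And>k w. k < Kmax \<Longrightarrow> w \<in> space (PiM (idx ` {..<k}) Mi) \<Longrightarrow> (\<integral>y. e k (w(idx k := y)) \<partial>Mi (idx k)) = 0"
  and var: "\<And>k w. k < Kmax \<Longrightarrow> w \<in> space (PiM (idx ` {..<k}) Mi) \<Longrightarrow>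
     (\<integral>\<^sup>+y. ennreal ((norm (e k (w(idx k := y))))\<^sup>2) \<partial>Mi (idx k)) \<le> ennreal s"
  and s: "0 \<le> s"
  and KK: "K' \<le> Kmax"
  shows "(\<integral>\<^sup>+w. ennreal ((norm (\<Sum>l<K'. a l *\<^sub>R e l w))\<^sup>2) \<partial>PiM (idx ` {..<K'}) Mi)
           \<le> ennreal ((\<Sum>l<K'. (a l)\<^sup>2) * s)"
  using KK
proof (induction K')
  case 0
  then show ?case by simp
next
  case (Suc K)
  have KM: "K < Kmax" "Suc K \<le> Kmax" using Suc.prems by auto
  interpret product_sigma_finite Mi
    using prob by (simp add: product_sigma_finite_def prob_space_imp_sigma_finite)
  define J where "J = idx ` {..<K}"
  define i where "i = idx K"
  have iJ: "i \<notin> J" using inj unfolding J_def i_def by (auto dest: injD)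
  have finJ: "finite J" unfolding J_def by simp
  have JS: "idx ` {..<Suc K} = insert i J" unfolding J_def i_def by (simp add: lessThan_Suc)
  interpret PJ: prob_space "PiM J Mi" using prob by (intro prob_space_PiM) auto
  define S where "S = (\<lambda>w. \<Sum>l<K. a l *\<^sub>R e l w)"
  have Smeas: "S \<in> borel_measurable (PiM J Mi)" unfolding S_def J_def
    using meas KM by (intro borel_measurable_sum borel_measurable_scaleR) auto
  have fmeas: "(\<lambda>w. ennreal ((norm (\<Sum>l<Suc K. a l *\<^sub>R e l w))\<^sup>2)) \<in> borel_measurable (PiM (insert i J) Mi)"
    unfolding JS[symmetric] using meas KM
    by (intro measurable_compose[OF _ measurable_ennreal] borel_measurable_power borel_measurable_norm
        borel_measurable_sum borel_measurable_scaleR) auto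
  have step: "(\<integral>\<^sup>+y. ennreal ((norm (\<Sum>l<Suc K. a l *\<^sub>R e l (x(i := y))))\<^sup>2) \<partial>Mi i)
        \<le> ennreal ((norm (S x))\<^sup>2) + ennreal ((a K)\<^sup>2) * ennreal s" if x: "x \<in> space (PiM J Mi)" for x
  proof -
    have "\<And>y. (\<Sum>l<Suc K. a l *\<^sub>R e l (x(i := y))) = S x + a K *\<^sub>R e K (x(i := y))"
    proof -
      fix y
      have "\<And>l. l < K \<Longrightarrow> e l (x(i := y)) = e l x"
      proof -
        fix l assume "l < K"
        show "e l (x(i := y)) = e l x"
          by (rule dep) (use \<open>l < K\<close> inj in \<open>auto simp: i_def dest: injD\<close>)
      qed
      then show "(\<Sum>l<Suc K. a l *\<^sub>R e l (x(i := y))) = S x + a K *\<^sub>R e K (x(i := y))"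
        unfolding S_def by simp
    qed
    then have "(\<integral>\<^sup>+y. ennreal ((norm (\<Sum>l<Suc K. a l *\<^sub>R e l (x(i := y))))\<^sup>2) \<partial>Mi i)
        = (\<integral>\<^sup>+y. ennreal ((norm (S x + a K *\<^sub>R e K (x(i := y))))\<^sup>2) \<partial>Mi i)" by simp
    also have "\<dots> \<le> ennreal ((norm (S x))\<^sup>2) + ennreal ((a K)\<^sup>2) * (\<integral>\<^sup>+y. ennreal ((norm (e K (x(i := y))))\<^sup>2) \<partial>Mi i)"
      by (rule one_step[OF prob]) (use int mean0 x KM in \<open>auto simp: i_def J_def\<close>)
    also have "\<dots> \<le> ennreal ((norm (S x))\<^sup>2) + ennreal ((a K)\<^sup>2) * ennreal s"
      using var[of K x] x KM by (intro add_mono mult_left_mono) (auto simp: i_def J_def)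
    finally show ?thesis .
  qed
  have "(\<integral>\<^sup>+w. ennreal ((norm (\<Sum>l<Suc K. a l *\<^sub>R e l w))\<^sup>2) \<partial>PiM (idx ` {..<Suc K}) Mi)
      = (\<integral>\<^sup>+x. (\<integral>\<^sup>+y. ennreal ((norm (\<Sum>l<Suc K. a l *\<^sub>R e l (x(i := y))))\<^sup>2) \<partial>Mi i) \<partial>PiM J Mi)"
    unfolding JS by (rule product_nn_integral_insert[OF finJ iJ fmeas])
  also have "\<dots> \<le> (\<integral>\<^sup>+x. ennreal ((norm (S x))\<^sup>2) + ennreal ((a K)\<^sup>2) * ennreal s \<partial>PiM J Mi)"
    by (rule nn_integral_mono) (rule step)
  also have "\<dots> = (\<integral>\<^sup>+x. ennreal ((norm (S x))\<^sup>2) \<partial>PiM J Mi) + ennreal ((a K)\<^sup>2) * ennreal s"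
    using Smeas by (subst nn_integral_add) (auto simp: PJ.emeasure_space_1)
  also have "\<dots> \<le> ennreal ((\<Sum>l<K. (a l)\<^sup>2) * s) + ennreal ((a K)\<^sup>2) * ennreal s"
    using Suc.IH KM unfolding S_def J_def by (intro add_mono) auto
  also have "\<dots> = ennreal ((\<Sum>l<Suc K. (a l)\<^sup>2) * s)"
    using s by (simp add: ennreal_plus[symmetric] ennreal_mult[symmetric] sum_nonneg algebra_simps del: ennreal_plus)
  finally show ?case .
qed

context
  fixes G :: "nat \<Rightarrow> real^'d \<Rightarrow> 's \<Rightarrow> real^'d" and n :: nat and b1 b2 eta lam :: real
    and x1 :: "real^'d"
begin

definition "st X t = dlion_state G X n b1 b2 eta lam x1 t"
definition "xx X t = fst (st X (t - 1))"
definition "mm X t j = fst (snd (st X t)) j"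
definition "vv X t j = snd (snd (st X t)) j"

lemma st_Suc: "st X (Suc t) =
   (fst (st X t) - eta *\<^sub>R (vsign (\<Sum>j\<in>{1..n}. (if t = 0 then G j (fst (st X t)) (X (Suc t) j)
        else (1 - b1) *\<^sub>R fst (snd (st X t)) j + b1 *\<^sub>R G j (fst (st X t)) (X (Suc t) j))) + lam *\<^sub>R fst (st X t)),
    (\<lambda>j. if t = 0 then G j (fst (st X t)) (X (Suc t) j)
        else (1 - b2) *\<^sub>R fst (snd (st X t)) j + b2 *\<^sub>R G j (fst (st X t)) (X (Suc t) j)),
    (\<lambda>j. if t = 0 then G j (fst (st X t)) (X (Suc t) j)
        else (1 - b1) *\<^sub>R fst (snd (st X t)) j + b1 *\<^sub>R G j (fst (st X t)) (X (Suc t) j)))"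
  unfolding st_def by (cases "dlion_state G X n b1 b2 eta lam x1 t"; cases t) (auto simp add: Let_def)

lemma xx_1: "xx X (Suc 0) = x1"
  by (simp add: xx_def st_def)

lemma xx_Suc: "1 \<le> t \<Longrightarrow> xx X (Suc t) = xx X t - eta *\<^sub>R (vsign (\<Sum>j\<in>{1..n}. vv X t j) + lam *\<^sub>R xx X t)"
  by (cases t) (auto simp: xx_def vv_def st_Suc)

lemma mm_1: "mm X (Suc 0) j = G j x1 (X (Suc 0) j)"
  by (simp add: mm_def st_Suc) (simp add: st_def)

lemma vv_1: "vv X (Suc 0) j = G j x1 (X (Suc 0) j)"
  by (simp add: vv_def st_Suc) (simp add: st_def)

lemma mm_Suc: "1 \<le> t \<Longrightarrow> mm X (Suc t) j = (1 - b2) *\<^sub>R mm X t j + b2 *\<^sub>R G j (xx X (Suc t)) (X (Suc t) j)"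
  by (simp add: mm_def xx_def st_Suc)

lemma vv_Suc: "1 \<le> t \<Longrightarrow> vv X (Suc t) j = (1 - b1) *\<^sub>R mm X t j + b1 *\<^sub>R G j (xx X (Suc t)) (X (Suc t) j)"
  by (simp add: vv_def mm_def xx_def st_Suc)

lemma dep_all:
  assumes "\<And>r j. 1 \<le> r \<Longrightarrow> r \<le> t \<Longrightarrow> j \<in> {1..n} \<Longrightarrow> X r j = X' r j"
  shows "xx X (Suc t) = xx X' (Suc t) \<and> (\<forall>j\<in>{1..n}. 1 \<le> t \<longrightarrow> mm X t j = mm X' t j \<and> vv X t j = vv X' t j)"
  using assms
proof (induction t)
  case 0
  then show ?case by (simp add: xx_1)
next
  case (Suc t)
  have IH: "xx X (Suc t) = xx X' (Suc t) \<and> (\<forall>j\<in>{1..n}. 1 \<le> t \<longrightarrow> mm X t j = mm X' t j \<and> vv X t j = vv X' t j)"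
    using Suc.prems by (intro Suc.IH) auto
  have mv: "\<forall>j\<in>{1..n}. mm X (Suc t) j = mm X' (Suc t) j \<and> vv X (Suc t) j = vv X' (Suc t) j"
  proof (cases "t = 0")
    case True
    then show ?thesis using Suc.prems by (simp add: mm_1 vv_1)
  next
    case False
    then show ?thesis using Suc.prems IH by (simp add: mm_Suc vv_Suc)
  qed
  then have "(\<Sum>j\<in>{1..n}. vv X (Suc t) j) = (\<Sum>j\<in>{1..n}. vv X' (Suc t) j)" by simp
  then have "xx X (Suc (Suc t)) = xx X' (Suc (Suc t))"
    using IH by (simp add: xx_Suc)
  then show ?case using mv by simp
qed

lemma dep_xx:
  assumes "\<And>r j. 1 \<le> r \<Longrightarrow> r < t \<Longrightarrow> j \<in> {1..n} \<Longrightarrow> X r j = X' r j" "1 \<le> t"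
  shows "xx X t = xx X' t"
  using dep_all[of "t - 1" X X'] assms by (cases t) auto

lemma dep_vv:
  assumes "\<And>r j. 1 \<le> r \<Longrightarrow> r \<le> t \<Longrightarrow> j \<in> {1..n} \<Longrightarrow> X r j = X' r j" "1 \<le> t" "j \<in> {1..n}"
  shows "vv X t j = vv X' t j"
  using dep_all[of t X X'] assms by auto

end

context
  fixes G :: "nat \<Rightarrow> real^'d \<Rightarrow> 's \<Rightarrow> real^'d" and n :: nat and b1 b2 eta lam :: real
    and x1 :: "real^'d" and gradf :: "nat \<Rightarrow> real^'d \<Rightarrow> real^'d"
begin

abbreviation "XX \<equiv> xx G n b1 b2 eta lam x1"
abbreviation "MM \<equiv> mm G n b1 b2 eta lam x1"
abbreviation "VV \<equiv> vv G n b1 b2 eta lam x1"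

definition "eps X s = (1 / real n) *\<^sub>R (\<Sum>j\<in>{1..n}. G j (XX X s) (X s j) - gradf j (XX X s))"
definition "Gr X s = (1 / real n) *\<^sub>R (\<Sum>j\<in>{1..n}. gradf j (XX X s))"
definition "W X t = (1 / real n) *\<^sub>R (\<Sum>j\<in>{1..n}. VV X t j) - Gr X t"
definition "EE X t = (1 / real n) *\<^sub>R (\<Sum>j\<in>{1..n}. MM X t j) - Gr X t"
definition "alpha t s = (if s = 1 then (1 - b2)^(t - 1) else b2 * (1 - b2)^(t - s))"
definition "Nn X t = (\<Sum>s\<in>{1..t}. alpha t s *\<^sub>R eps X s)"
definition "Bd X t = EE X t - Nn X t"

lemma eps_alt: "eps X s = (1 / real n) *\<^sub>R (\<Sum>j\<in>{1..n}. G j (XX X s) (X s j)) - Gr X s"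
  unfolding eps_def Gr_def by (simp add: sum_subtractf algebra_simps)

lemma EE_1: "EE X 1 = eps X 1"
  unfolding EE_def eps_alt by (simp add: mm_1 xx_1)

lemma W_1: "W X 1 = eps X 1"
  unfolding W_def eps_alt by (simp add: vv_1 xx_1)

lemma EE_Suc: assumes "1 \<le> t" shows "EE X (Suc t) = (1 - b2) *\<^sub>R (EE X t + Gr X t - Gr X (Suc t)) + b2 *\<^sub>R eps X (Suc t)"
proof -
  have h: "(\<Sum>j\<in>{1..n}. MM X (Suc t) j) = (1 - b2) *\<^sub>R (\<Sum>j\<in>{1..n}. MM X t j) + b2 *\<^sub>R (\<Sum>j\<in>{1..n}. G j (XX X (Suc t)) (X (Suc t) j))"
    using assms by (simp add: mm_Suc sum.distrib scaleR_sum_right)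
  show ?thesis unfolding EE_def eps_alt h by (simp add: algebra_simps, simp add: scaleR_add_left[symmetric] add_divide_distrib[symmetric] del: scaleR_add_left)
qed

lemma W_Suc: assumes "1 \<le> t" shows "W X (Suc t) = (1 - b1) *\<^sub>R (EE X t + Gr X t - Gr X (Suc t)) + b1 *\<^sub>R eps X (Suc t)"
proof -
  have h: "(\<Sum>j\<in>{1..n}. VV X (Suc t) j) = (1 - b1) *\<^sub>R (\<Sum>j\<in>{1..n}. MM X t j) + b1 *\<^sub>R (\<Sum>j\<in>{1..n}. G j (XX X (Suc t)) (X (Suc t) j))"
    using assms by (simp add: vv_Suc sum.distrib scaleR_sum_right)
  show ?thesis unfolding W_def EE_def eps_alt h by (simp add: algebra_simps, simp add: scaleR_add_left[symmetric] add_divide_distrib[symmetric] del: scaleR_add_left)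
qed

lemma Nn_1: "Nn X 1 = eps X 1"
  unfolding Nn_def alpha_def by simp

lemma Nn_Suc: assumes "1 \<le> t" shows "Nn X (Suc t) = (1 - b2) *\<^sub>R Nn X t + b2 *\<^sub>R eps X (Suc t)"
proof -
  have a: "alpha (Suc t) s = (1 - b2) * alpha t s" if "s \<in> {1..t}" for s
  proof (cases "s = 1")
    case True then show ?thesis using assms by (cases t) (auto simp: alpha_def)
  next
    case False
    then have "Suc t - s = Suc (t - s)" using that by auto
    then show ?thesis using False by (simp add: alpha_def)
  qed
  have "Nn X (Suc t) = (\<Sum>s\<in>{1..t}. alpha (Suc t) s *\<^sub>R eps X s) + alpha (Suc t) (Suc t) *\<^sub>R eps X (Suc t)"
    unfolding Nn_def by (simp add: sum.cl_ivl_Suc)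
  also have "(\<Sum>s\<in>{1..t}. alpha (Suc t) s *\<^sub>R eps X s) = (1 - b2) *\<^sub>R Nn X t"
    unfolding Nn_def scaleR_sum_right by (intro sum.cong) (auto simp: a)
  also have "alpha (Suc t) (Suc t) = b2" using assms by (simp add: alpha_def)
  finally show ?thesis .
qed

lemma alpha_Suc: "1 \<le> t \<Longrightarrow> s \<in> {1..t} \<Longrightarrow> alpha (Suc t) s = (1 - b2) * alpha t s"
proof (cases "s = 1")
  case True
  assume "1 \<le> t" then show ?thesis using True by (cases t) (auto simp: alpha_def)
next
  case False
  assume "s \<in> {1..t}"
  then have "Suc t - s = Suc (t - s)" by auto
  then show ?thesis using False by (simp add: alpha_def)
qed

lemma alpha_sq_bound:
  assumes b2: "0 < b2" "b2 \<le> 1" and s: "1 \<le> s"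
  shows "(\<Sum>r\<in>{1..s}. (alpha s r)\<^sup>2) \<le> ((1 - b2)\<^sup>2) ^ (s - 1) + b2 / (2 - b2)"
  using s
proof (induction s rule: dec_induct)
  case base
  have "0 \<le> b2 / (2 - b2)" using b2 by simp
  then show ?case by (simp add: alpha_def)
next
  case (step s)
  have "(\<Sum>r\<in>{1..Suc s}. (alpha (Suc s) r)\<^sup>2) = (\<Sum>r\<in>{1..s}. (alpha (Suc s) r)\<^sup>2) + (alpha (Suc s) (Suc s))\<^sup>2"
    by (simp add: sum.cl_ivl_Suc)
  also have "(\<Sum>r\<in>{1..s}. (alpha (Suc s) r)\<^sup>2) = (1 - b2)\<^sup>2 * (\<Sum>r\<in>{1..s}. (alpha s r)\<^sup>2)"
    unfolding sum_distrib_left by (intro sum.cong) (auto simp: alpha_Suc[OF step(1)] power_mult_distrib)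
  also have "alpha (Suc s) (Suc s) = b2" using step(1) by (simp add: alpha_def)
  also have "(1 - b2)\<^sup>2 * (\<Sum>r\<in>{1..s}. (alpha s r)\<^sup>2) + b2\<^sup>2
      \<le> (1 - b2)\<^sup>2 * (((1 - b2)\<^sup>2) ^ (s - 1) + b2 / (2 - b2)) + b2\<^sup>2"
    using step(3) by (intro add_right_mono mult_left_mono) auto
  also have "\<dots> = ((1 - b2)\<^sup>2) ^ (Suc s - 1) + b2 / (2 - b2)"
  proof -
    have "((1 - b2)\<^sup>2) ^ (Suc s - 1) = (1 - b2)\<^sup>2 * ((1 - b2)\<^sup>2) ^ (s - 1)"
      using step(1) by (cases s) auto
    moreover have "(1 - b2)\<^sup>2 * (b2 / (2 - b2)) + b2\<^sup>2 = b2 / (2 - b2)"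
      using b2 by (simp add: field_simps power2_eq_square)
    ultimately show ?thesis by (simp add: algebra_simps)
  qed
  finally show ?case .
qed

lemma Bd_1: "Bd X 1 = 0"
  unfolding Bd_def EE_1 Nn_1 by simp

lemma Bd_Suc: "1 \<le> t \<Longrightarrow> Bd X (Suc t) = (1 - b2) *\<^sub>R (Bd X t + Gr X t - Gr X (Suc t))"
  unfolding Bd_def by (simp add: EE_Suc Nn_Suc algebra_simps)

lemma W_Suc_split: "1 \<le> t \<Longrightarrow> W X (Suc t) =
   ((1 - b1) *\<^sub>R Nn X t + b1 *\<^sub>R eps X (Suc t)) + (1 - b1) *\<^sub>R (Bd X t + Gr X t - Gr X (Suc t))"
  by (simp add: W_Suc Bd_def algebra_simps)

end

lemma young_split:
  fixes a b :: "'a::real_inner"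
  assumes "0 \<le> u"
  shows "(norm (a + u *\<^sub>R b))\<^sup>2 \<le> (1 + u\<^sup>2 / 6) * (norm a)\<^sup>2 + (u\<^sup>2 + 6) * (norm b)\<^sup>2"
proof -
  have "norm (a + u *\<^sub>R b) \<le> norm a + u * norm b" using assms
    by (metis abs_of_nonneg norm_scaleR norm_triangle_ineq)
  then have "(norm (a + u *\<^sub>R b))\<^sup>2 \<le> (norm a + u * norm b)\<^sup>2"
    by (simp add: power_mono)
  also have "\<dots> \<le> (1 + u\<^sup>2 / 6) * (norm a)\<^sup>2 + (u\<^sup>2 + 6) * (norm b)\<^sup>2"
  proof -
    have "0 \<le> (u * norm a / 6 - norm b)\<^sup>2" by simp
    then have "2 * u * norm a * norm b \<le> u\<^sup>2 / 6 * (norm a)\<^sup>2 + 6 * (norm b)\<^sup>2"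
      by (simp add: power2_eq_square algebra_simps)
    then show ?thesis by (simp add: power2_eq_square algebra_simps)
  qed
  finally show ?thesis .
qed

lemma infnorm_vsign: "infnorm (vsign v) \<le> 1"
  unfolding infnorm_cart vsign_def
  by (rule cSup_least) (auto simp: sgn_real_def)

context
  fixes G :: "nat \<Rightarrow> real^'d \<Rightarrow> 's \<Rightarrow> real^'d" and n :: nat and b1 b2 eta lam :: real
    and x1 :: "real^'d" and gradf :: "nat \<Rightarrow> real^'d \<Rightarrow> real^'d" and L :: real and T :: nat
  assumes eta: "0 < eta" and lam: "0 \<le> lam" "lam \<le> 1 / (2 * eta * real T)"
    and x1: "infnorm x1 \<le> eta" and T: "1 \<le> T" and n: "1 \<le> n"
    and Lip: "\<And>j x y. j \<in> {1..n} \<Longrightarrow> norm (gradf j x - gradf j y) \<le> L * norm (x - y)"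
    and L: "0 \<le> L"
    and b2: "0 < b2" "b2 \<le> 1"
begin

abbreviation "XXX \<equiv> xx G n b1 b2 eta lam x1"

lemma etalam: "eta * lam \<le> 1 / 2"
proof -
  have "eta * lam \<le> eta * (1 / (2 * eta * real T))" using lam eta by (intro mult_left_mono) auto
  also have "\<dots> = 1 / (2 * real T)" using eta by simp
  also have "\<dots> \<le> 1 / 2" using T by (simp add: field_simps)
  finally show ?thesis .
qed

lemma xx_infnorm: "1 \<le> t \<Longrightarrow> infnorm (XXX X t) \<le> real t * eta"
proof (induction t rule: dec_induct)
  case base
  then show ?case using x1 by (simp add: xx_1)
next
  case (step t)
  have e: "XXX X (Suc t) = (1 - eta * lam) *\<^sub>R XXX X t - eta *\<^sub>R vsign (\<Sum>j\<in>{1..n}. vv G n b1 b2 eta lam x1 X t j)"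
    using step(1) by (simp add: xx_Suc algebra_simps)
  have "infnorm (XXX X (Suc t)) \<le> infnorm ((1 - eta * lam) *\<^sub>R XXX X t) + infnorm (eta *\<^sub>R vsign (\<Sum>j\<in>{1..n}. vv G n b1 b2 eta lam x1 X t j))"
    unfolding e by (metis infnorm_triangle infnorm_neg diff_conv_add_uminus)
  also have "\<dots> \<le> (1 - eta * lam) * (real t * eta) + eta * 1"
    using etalam eta step(3) infnorm_vsign by (auto simp: infnorm_mul intro!: add_mono mult_left_mono)
  also have "\<dots> \<le> real (Suc t) * eta" using eta lam by (simp add: algebra_simps)
  finally show ?case .
qed

lemma step_bound:
  assumes "1 \<le> t" "t < T"
  shows "norm (XXX X (Suc t) - XXX X t) \<le> eta * (3 / 2) * sqrt (real CARD('d))"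
proof -
  define v where "v = vsign (\<Sum>j\<in>{1..n}. vv G n b1 b2 eta lam x1 X t j)"
  have e: "XXX X (Suc t) - XXX X t = - eta *\<^sub>R (v + lam *\<^sub>R XXX X t)"
    using assms by (simp add: xx_Suc v_def)
  have "infnorm (lam *\<^sub>R XXX X t) \<le> lam * (real t * eta)"
    using xx_infnorm[OF assms(1)] lam by (simp add: infnorm_mul mult_left_mono)
  also have "\<dots> \<le> (1 / (2 * eta * real T)) * (real T * eta)"
    using lam eta assms by (intro mult_mono) auto
  also have "\<dots> = 1 / 2" using eta T by (simp add: field_simps)
  finally have i1: "infnorm (lam *\<^sub>R XXX X t) \<le> 1 / 2" .
  have "infnorm (v + lam *\<^sub>R XXX X t) \<le> 3 / 2"
    using infnorm_triangle[of v "lam *\<^sub>R XXX X t"] i1 infnorm_vsign[of "(\<Sum>j\<in>{1..n}. vv G n b1 b2 eta lam x1 X t j)"]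
    unfolding v_def by linarith
  then have "norm (v + lam *\<^sub>R XXX X t) \<le> sqrt (real CARD('d)) * (3 / 2)"
    using norm_le_infnorm[of "v + lam *\<^sub>R XXX X t"] by (smt (verit) DIM_cart DIM_real mult.right_neutral mult_left_mono real_sqrt_ge_zero of_nat_0_le_iff)
  moreover have "norm (- eta *\<^sub>R (v + lam *\<^sub>R XXX X t)) = eta * norm (v + lam *\<^sub>R XXX X t)"
    using eta by simp
  ultimately show ?thesis unfolding e using eta
    by (metis (no_types, lifting) mult.assoc mult.commute mult_left_mono less_imp_le)
qed

definition "delta = L * eta * (3 / 2) * sqrt (real CARD('d))"

lemma delta_nonneg: "0 \<le> delta"
  unfolding delta_def using L eta by simp

lemma Gr_diff:
  assumes "1 \<le> t" "t < T"
  shows "norm (Gr G n b1 b2 eta lam x1 gradf X t - Gr G n b1 b2 eta lam x1 gradf X (Suc t)) \<le> delta"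
proof -
  define a where "a = XXX X t"
  define b where "b = XXX X (Suc t)"
  have "Gr G n b1 b2 eta lam x1 gradf X t - Gr G n b1 b2 eta lam x1 gradf X (Suc t)
      = (1 / real n) *\<^sub>R (\<Sum>j\<in>{1..n}. gradf j a - gradf j b)"
    unfolding Gr_def a_def b_def by (simp add: sum_subtractf algebra_simps)
  then have "norm (Gr G n b1 b2 eta lam x1 gradf X t - Gr G n b1 b2 eta lam x1 gradf X (Suc t))
      \<le> (1 / real n) * (\<Sum>j\<in>{1..n}. norm (gradf j a - gradf j b))"
    using norm_sum[of "\<lambda>j. gradf j a - gradf j b" "{1..n}"] by (simp add: divide_right_mono)
  also have "\<dots> \<le> (1 / real n) * (\<Sum>j\<in>{1..n}. L * norm (a - b))"
    using Lip by (intro mult_left_mono sum_mono) auto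
  also have "\<dots> = L * norm (b - a)" using n by (simp add: norm_minus_commute)
  also have "\<dots> \<le> L * (eta * (3 / 2) * sqrt (real CARD('d)))"
    unfolding a_def b_def using step_bound[OF assms] L by (rule mult_left_mono)
  finally show ?thesis unfolding delta_def by (simp add: algebra_simps)
qed

lemma Bd_bound: "1 \<le> t \<Longrightarrow> t \<le> T \<Longrightarrow> norm (Bd G n b1 b2 eta lam x1 gradf X t) \<le> (1 - b2) / b2 * delta"
proof (induction t rule: dec_induct)
  case base
  have "Bd G n b1 b2 eta lam x1 gradf X 1 = 0" by (rule Bd_1)
  then show ?case using b2 delta_nonneg by simp
next
  case (step t)
  have "norm (Bd G n b1 b2 eta lam x1 gradf X (Suc t))
     = (1 - b2) * norm (Bd G n b1 b2 eta lam x1 gradf X t + (Gr G n b1 b2 eta lam x1 gradf X t - Gr G n b1 b2 eta lam x1 gradf X (Suc t)))"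
    unfolding Bd_Suc[OF step(1)] using b2 by (simp add: add_diff_eq)
  also have "\<dots> \<le> (1 - b2) * ((1 - b2) / b2 * delta + delta)"
    using step b2 Gr_diff[of t X] by (intro mult_left_mono order.trans[OF norm_triangle_ineq] add_mono) auto
  also have "\<dots> = (1 - b2) / b2 * delta" using b2 by (simp add: field_simps)
  finally show ?case .
qed

lemma drift_bound:
  assumes "1 \<le> t" "t < T"
  shows "norm (Bd G n b1 b2 eta lam x1 gradf X t + Gr G n b1 b2 eta lam x1 gradf X t - Gr G n b1 b2 eta lam x1 gradf X (Suc t)) \<le> delta / b2"
proof -
  have "norm (Bd G n b1 b2 eta lam x1 gradf X t + (Gr G n b1 b2 eta lam x1 gradf X t - Gr G n b1 b2 eta lam x1 gradf X (Suc t)))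
     \<le> (1 - b2) / b2 * delta + delta"
    using Bd_bound[of t X] Gr_diff[of t X] assms by (intro order.trans[OF norm_triangle_ineq] add_mono) auto
  also have "\<dots> = delta / b2" using b2 by (simp add: field_simps)
  finally show ?thesis by (simp add: algebra_simps)
qed

lemma W_path_bound:
  assumes "1 \<le> t" "t < T" "0 \<le> 1 - b1"
  shows "(norm (W G n b1 b2 eta lam x1 gradf X (Suc t)))\<^sup>2
     \<le> (1 + (1 - b1)\<^sup>2 / 6) * (norm ((1 - b1) *\<^sub>R Nn G n b1 b2 eta lam x1 gradf X t + b1 *\<^sub>R eps G n b1 b2 eta lam x1 gradf X (Suc t)))\<^sup>2
       + ((1 - b1)\<^sup>2 + 6) * (delta / b2)\<^sup>2"
proof -
  have "(norm (W G n b1 b2 eta lam x1 gradf X (Suc t)))\<^sup>2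
     \<le> (1 + (1 - b1)\<^sup>2 / 6) * (norm ((1 - b1) *\<^sub>R Nn G n b1 b2 eta lam x1 gradf X t + b1 *\<^sub>R eps G n b1 b2 eta lam x1 gradf X (Suc t)))\<^sup>2
       + ((1 - b1)\<^sup>2 + 6) * (norm (Bd G n b1 b2 eta lam x1 gradf X t + Gr G n b1 b2 eta lam x1 gradf X t - Gr G n b1 b2 eta lam x1 gradf X (Suc t)))\<^sup>2"
    unfolding W_Suc_split[OF assms(1)] by (rule young_split) (use assms in auto)
  also have "\<dots> \<le> (1 + (1 - b1)\<^sup>2 / 6) * (norm ((1 - b1) *\<^sub>R Nn G n b1 b2 eta lam x1 gradf X t + b1 *\<^sub>R eps G n b1 b2 eta lam x1 gradf X (Suc t)))\<^sup>2
       + ((1 - b1)\<^sup>2 + 6) * (delta / b2)\<^sup>2"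
    using drift_bound[OF assms(1,2), of X] by (intro add_left_mono mult_left_mono power_mono) auto
  finally show ?thesis .
qed


lemma W_path_bound':
  assumes "1 \<le> t" "t < T" "0 \<le> 1 - b1"
  shows "(norm (W G n b1 b2 eta lam x1 gradf X (Suc t)))\<^sup>2
     \<le> (1 + (1 - b1)\<^sup>2 / 6) * (norm ((1 - b1) *\<^sub>R Nn G n b1 b2 eta lam x1 gradf X t + b1 *\<^sub>R eps G n b1 b2 eta lam x1 gradf X (Suc t)))\<^sup>2
       + ((1 - b1)\<^sup>2 + 6) * ((L * eta * (3 / 2) * sqrt (real CARD('d))) / b2)\<^sup>2"
  using W_path_bound[OF assms] unfolding delta_def .

end

lemma vsign_meas[measurable]: "vsign \<in> borel_measurable borel"
proof -
  have "\<forall>i\<in>Basis. (\<lambda>x. vsign x \<bullet> i) \<in> borel_measurable (borel :: (real^'d) measure)"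
  proof
    fix i :: "real^'d" assume "i \<in> Basis"
    then obtain k where k: "i = axis k 1" by (auto simp: Basis_vec_def)
    have "(\<lambda>x. vsign x \<bullet> i) = (\<lambda>x::real^'d. sgn (x $ k))"
      unfolding k vsign_def by (simp add: inner_axis)
    moreover have "(\<lambda>x::real^'d. sgn (x $ k)) \<in> borel_measurable borel"
      by measurable
    ultimately show "(\<lambda>x. vsign x \<bullet> i) \<in> borel_measurable borel" by simp
  qed
  then show ?thesis by (simp add: borel_measurable_euclidean_space[of vsign])
qed

lemma meas_restrict_dep:
  fixes f :: "('i \<Rightarrow> 's) \<Rightarrow> 'b::topological_space"
  assumes f: "f \<in> borel_measurable (PiM I Mi)" and JI: "J \<subseteq> I"
    and ne: "\<And>i. i \<in> I \<Longrightarrow> space (Mi i) \<noteq> {}"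
    and dep: "\<And>w w'. (\<And>i. i \<in> J \<Longrightarrow> w i = w' i) \<Longrightarrow> f w = f w'"
  shows "f \<in> borel_measurable (PiM J Mi)"
proof -
  define c where "c i = (SOME y. y \<in> space (Mi i))" for i
  have c: "i \<in> I \<Longrightarrow> c i \<in> space (Mi i)" for i
    unfolding c_def using ne by (simp add: some_in_eq)
  define R where "R w = (\<lambda>i\<in>I. if i \<in> J then w i else c i)" for w :: "'i \<Rightarrow> 's"
  have R: "R \<in> measurable (PiM J Mi) (PiM I Mi)"
    unfolding R_def
  proof (rule measurable_restrict)
    fix i assume i: "i \<in> I"
    show "(\<lambda>w. if i \<in> J then w i else c i) \<in> measurable (PiM J Mi) (Mi i)"
    proof (cases "i \<in> J")
      case True then show ?thesis by simp
    next
      case False then show ?thesis using c[OF i] by simp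
    qed
  qed
  have "(\<lambda>w. f (R w)) \<in> borel_measurable (PiM J Mi)"
    using measurable_compose[OF R f] .
  moreover have "\<And>w. f (R w) = f w"
    by (rule dep) (use JI in \<open>auto simp: R_def\<close>)
  ultimately show ?thesis by simp
qed

lemma idx_inv:
  fixes q m n :: nat
  assumes "m < n"
  shows "(q * n + m) div n = q" "(q * n + m) mod n = m"
  using assms by auto

lemma idx_inj: "inj (\<lambda>k::nat. (k div n + 1, k mod n + 1))"
proof (rule injI)
  fix a b :: nat assume "(a div n + 1, a mod n + 1) = (b div n + 1, b mod n + 1)"
  then have "a div n = b div n" "a mod n = b mod n" by auto
  then show "a = b" by (metis div_mult_mod_eq)
qed

lemma idx_img:
  assumes n: "1 \<le> n"
  shows "(\<lambda>k::nat. (k div n + 1, k mod n + 1)) ` {..<T * n} = {1..T} \<times> {1..n}"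
proof -
  define idx where "idx k = (k div n + 1, k mod n + 1)" for k
  have img: "idx ` {..<T * n} = {1..T} \<times> {1..n}"
  proof
    show "idx ` {..<T * n} \<subseteq> {1..T} \<times> {1..n}"
    proof
      fix x assume "x \<in> idx ` {..<T * n}"
      then obtain k where k: "k < T * n" "x = idx k" by auto
      have "k div n < T" using k(1) n by (simp add: div_less_iff_less_mult mult.commute)
      moreover have "k mod n < n" using n by auto
      ultimately show "x \<in> {1..T} \<times> {1..n}" using k(2) unfolding idx_def by auto
    qed
  next
    show "{1..T} \<times> {1..n} \<subseteq> idx ` {..<T * n}"
    proof
      fix x assume x: "x \<in> {1..T} \<times> {1..n}"
      then obtain r j where rj: "x = (r, j)" "1 \<le> r" "r \<le> T" "j \<in> {1..n}" by auto
      obtain q m where qm: "r = Suc q" "j = Suc m" using rj(2,4) by (metis One_nat_def Suc_le_D atLeastAtMost_iff)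
      have mn: "m < n" using rj(4) qm by auto
      define k where "k = q * n + m"
      have "idx k = (r, j)" using idx_inv[OF mn] unfolding idx_def k_def qm by auto
      moreover have "k < T * n"
      proof -
        have "k < q * n + n" unfolding k_def using mn by auto
        also have "\<dots> = r * n" using qm by simp
        also have "\<dots> \<le> T * n" using rj(3) by simp
        finally show ?thesis .
      qed
      ultimately show "x \<in> idx ` {..<T * n}" using rj(1) by (intro image_eqI[where x=k]) auto
    qed
  qed
  then show ?thesis unfolding idx_def .
qed

lemma sum_idx:
  fixes h :: "nat \<times> nat \<Rightarrow> 'a::comm_monoid_add"
  assumes n: "1 \<le> n"
  shows "(\<Sum>k<T * n. h (k div n + 1, k mod n + 1)) = (\<Sum>s\<in>{1..T}. \<Sum>j\<in>{1..n}. h (s, j))"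
proof -
  define idx where "idx k = (k div n + 1, k mod n + 1)" for k
  have inj: "inj idx"
  proof (rule injI)
    fix a b assume "idx a = idx b"
    then have "a div n = b div n" "a mod n = b mod n" unfolding idx_def by auto
    then show "a = b" by (metis div_mult_mod_eq)
  qed
  have img: "idx ` {..<T * n} = {1..T} \<times> {1..n}"
  proof
    show "idx ` {..<T * n} \<subseteq> {1..T} \<times> {1..n}"
    proof
      fix x assume "x \<in> idx ` {..<T * n}"
      then obtain k where k: "k < T * n" "x = idx k" by auto
      have "k div n < T" using k(1) n by (simp add: div_less_iff_less_mult mult.commute)
      moreover have "k mod n < n" using n by auto
      ultimately show "x \<in> {1..T} \<times> {1..n}" using k(2) unfolding idx_def by auto
    qed
  next
    show "{1..T} \<times> {1..n} \<subseteq> idx ` {..<T * n}"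
    proof
      fix x assume x: "x \<in> {1..T} \<times> {1..n}"
      then obtain r j where rj: "x = (r, j)" "1 \<le> r" "r \<le> T" "j \<in> {1..n}" by auto
      obtain q m where qm: "r = Suc q" "j = Suc m" using rj(2,4) by (metis One_nat_def Suc_le_D atLeastAtMost_iff)
      have mn: "m < n" using rj(4) qm by auto
      define k where "k = q * n + m"
      have "idx k = (r, j)" using idx_inv[OF mn] unfolding idx_def k_def qm by auto
      moreover have "k < T * n"
      proof -
        have "k < q * n + n" unfolding k_def using mn by auto
        also have "\<dots> = r * n" using qm by simp
        also have "\<dots> \<le> T * n" using rj(3) by simp
        finally show ?thesis .
      qed
      ultimately show "x \<in> idx ` {..<T * n}" using rj(1) by (intro image_eqI[where x=k]) auto
    qed
  qed
  have "(\<Sum>x\<in>idx ` {..<T * n}. h x) = (\<Sum>k<T * n. h (idx k))"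
    using sum.reindex[OF inj_on_subset[OF inj subset_UNIV], of h] by (simp add: comp_def)
  then have "(\<Sum>k<T * n. h (idx k)) = (\<Sum>x\<in>idx ` {..<T * n}. h x)" by simp
  also have "\<dots> = (\<Sum>x\<in>{1..T} \<times> {1..n}. h x)" using img by simp
  also have "\<dots> = (\<Sum>s\<in>{1..T}. \<Sum>j\<in>{1..n}. h (s, j))" by (simp add: sum.cartesian_product)
  finally show ?thesis unfolding idx_def .
qed

lemma cond2:
  fixes b1 b2 :: real
  assumes b1: "0 < b1" "b1 \<le> 1" and b2: "0 < b2" "b2 \<le> 1"
    and b12: "b2\<^sup>2 \<le> b1" "b1 \<le> sqrt b2"
  shows "(1 + (1 - b1)\<^sup>2 / 6) * ((1 - b1)\<^sup>2 * (b2 / (2 - b2)) + b1\<^sup>2) \<le> 2 * b2"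
proof -
  define u where "u = 1 - b1"
  have u: "0 \<le> u" "u < 1" using b1 unfolding u_def by auto
  have b1sq: "b1\<^sup>2 \<le> b2" using power_mono[OF b12(2), of 2] b1 b2 by simp
  have e: "(1 - u / 2)\<^sup>2 = 1 - u + u\<^sup>2 / 4" by (simp add: power2_diff power_divide)
  have "0 \<le> u\<^sup>2 / 4" by simp
  then have "b2\<^sup>2 \<le> 1 - u + u\<^sup>2 / 4" using b12(1) unfolding u_def by linarith
  then have "b2\<^sup>2 \<le> (1 - u / 2)\<^sup>2" using e by linarith
  then have b2u: "b2 \<le> 1 - u / 2" by (rule power2_le_imp_le) (use u in linarith)
  have z: "1 + u / 2 \<le> 2 - b2" using b2u by simp
  have "u\<^sup>2 / (2 - b2) \<le> u\<^sup>2 / (1 + u / 2)"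
    using z u by (intro divide_left_mono) auto
  also have "\<dots> = 2 * u\<^sup>2 / (2 + u)" using u by (simp add: field_simps)
  finally have f: "u\<^sup>2 / (2 - b2) \<le> 2 * u\<^sup>2 / (2 + u)" .
  have poly: "(6 + u\<^sup>2) * (2 * u\<^sup>2 + (2 + u)) \<le> 12 * (2 + u)"
  proof -
    have "u^4 \<le> u^2" using u by (intro power_decreasing) auto
    moreover have "u^3 \<le> u^2" using u by (intro power_decreasing) auto
    moreover have "17 * u\<^sup>2 - 6 * u - 12 \<le> 0"
    proof -
      have "u\<^sup>2 \<le> u" using u by (simp add: power2_eq_square mult_left_le_one_le)
      then show ?thesis using u by linarith
    qed
    moreover have "(6 + u\<^sup>2) * (2 * u\<^sup>2 + (2 + u)) = 2 * u^4 + u^3 + 14 * u\<^sup>2 + 6 * u + 12"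
      by (simp add: algebra_simps power2_eq_square power3_eq_cube power4_eq_xxxx)
    moreover have "12 * (2 + u) = 24 + 12 * u" by simp
    ultimately show ?thesis by linarith
  qed
  have c0: "0 \<le> 1 + u\<^sup>2 / 6" by (simp add: add_nonneg_nonneg)
  have s1: "u\<^sup>2 * (b2 / (2 - b2)) + b1\<^sup>2 \<le> b2 * (u\<^sup>2 / (2 - b2)) + b2"
    using b1sq by (simp add: mult.commute)
  have s2: "b2 * (u\<^sup>2 / (2 - b2)) + b2 \<le> b2 * (2 * u\<^sup>2 / (2 + u)) + b2"
    using mult_left_mono[OF f, of b2] b2 by (intro add_right_mono) auto
  have s3: "(1 + u\<^sup>2 / 6) * (2 * u\<^sup>2 / (2 + u) + 1) \<le> 2"
  proof -
    have "(1 + u\<^sup>2 / 6) * (2 * u\<^sup>2 / (2 + u) + 1) = (6 + u\<^sup>2) * (2 * u\<^sup>2 + (2 + u)) / (6 * (2 + u))"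
      using u by (simp add: field_simps)
    also have "\<dots> \<le> 12 * (2 + u) / (6 * (2 + u))" using poly u by (intro divide_right_mono) auto
    also have "\<dots> = 2" using u by (simp add: field_simps)
    finally show ?thesis .
  qed
  have "(1 + u\<^sup>2 / 6) * (u\<^sup>2 * (b2 / (2 - b2)) + b1\<^sup>2) \<le> (1 + u\<^sup>2 / 6) * (b2 * (2 * u\<^sup>2 / (2 + u)) + b2)"
    using s1 s2 c0 by (meson mult_left_mono order_trans)
  also have "\<dots> = b2 * ((1 + u\<^sup>2 / 6) * (2 * u\<^sup>2 / (2 + u) + 1))" by (simp add: algebra_simps)
  also have "\<dots> \<le> b2 * 2" using s3 b2 by (simp add: mult_left_mono)
  finally show ?thesis unfolding u_def[symmetric] by simp
qed

lemma cond1: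
  fixes b1 b2 :: real
  assumes b1: "0 < b1" "b1 \<le> 1" and b2: "0 < b2" "b2 \<le> 1"
    and b12: "b2\<^sup>2 \<le> b1"
  shows "1 + (1 + (1 - b1)\<^sup>2 / 6) * (1 - b1)\<^sup>2 / (b2 * (2 - b2)) \<le> 2 / b2"
proof -
  define u where "u = 1 - b1"
  have u: "0 \<le> u" "u < 1" "u \<le> 1 - b2\<^sup>2" using b1 b12 unfolding u_def by auto
  have "u\<^sup>2 \<le> u" using u by (simp add: power2_eq_square mult_left_le_one_le)
  have "(1 + u\<^sup>2 / 6) * u\<^sup>2 \<le> (7 / 6) * u"
  proof -
    have "(1 + u\<^sup>2 / 6) \<le> 7 / 6" using \<open>u\<^sup>2 \<le> u\<close> u by linarith
    then have "(1 + u\<^sup>2 / 6) * u\<^sup>2 \<le> 7 / 6 * u\<^sup>2" by (intro mult_right_mono) auto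
    then show ?thesis using \<open>u\<^sup>2 \<le> u\<close> by linarith
  qed
  also have "\<dots> \<le> 7 / 6 * (1 - b2\<^sup>2)" using u by simp
  also have "\<dots> \<le> (2 - b2)\<^sup>2"
  proof -
    have "0 \<le> 13 * (b2 - 12 / 13)\<^sup>2 + (17 * 13 - 144) / 13" by simp
    then have "0 \<le> 17 - 24 * b2 + 13 * b2\<^sup>2" by (simp add: power2_eq_square algebra_simps)
    moreover have "(2 - b2)\<^sup>2 = 4 - 4 * b2 + b2\<^sup>2" by (simp add: power2_eq_square algebra_simps)
    moreover have "7 / 6 * (1 - b2\<^sup>2) = 7 / 6 - 7 / 6 * b2\<^sup>2" by (simp only: right_diff_distrib mult_1_right)
    ultimately show ?thesis by linarith
  qed
  finally have k: "(1 + u\<^sup>2 / 6) * u\<^sup>2 \<le> (2 - b2)\<^sup>2" .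
  have pos: "0 < b2 * (2 - b2)" using b2 by simp
  have "1 + (1 + u\<^sup>2 / 6) * u\<^sup>2 / (b2 * (2 - b2)) = (b2 * (2 - b2) + (1 + u\<^sup>2 / 6) * u\<^sup>2) / (b2 * (2 - b2))"
    using pos b2 by (simp add: add_divide_distrib)
  also have "\<dots> \<le> (b2 * (2 - b2) + (2 - b2)\<^sup>2) / (b2 * (2 - b2))"
    using k pos by (intro divide_right_mono) auto
  also have "\<dots> = 2 / b2" using b2 by (simp add: field_simps power2_eq_square)
  finally show ?thesis unfolding u_def .
qed


lemma geo_sum:
  fixes q :: real
  assumes "1 \<le> T"
  shows "(1 - q) * (\<Sum>s\<in>{1..<T}. q ^ (s - 1)) = 1 - q ^ (T - 1)"
  using assms
proof (induction T rule: dec_induct)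
  case base then show ?case by simp
next
  case (step T)
  have "(1 - q) * (\<Sum>s\<in>{1..<Suc T}. q ^ (s - 1)) = (1 - q) * (\<Sum>s\<in>{1..<T}. q ^ (s - 1)) + (1 - q) * q ^ (T - 1)"
    using step(1) by (simp add: sum.atLeastLessThan_Suc algebra_simps)
  also have "\<dots> = 1 - q ^ T"
    using step(1,3) by (cases T) (auto simp: algebra_simps)
  finally show ?case by simp
qed

lemma arith_total:
  fixes b1 b2 S Dl :: real and T :: nat and A :: "nat \<Rightarrow> real"
  assumes b1: "0 < b1" "b1 \<le> 1" and b2: "0 < b2" "b2 \<le> 1"
    and b12: "b2\<^sup>2 \<le> b1" "b1 \<le> sqrt b2"
    and T: "1 \<le> T" and S: "0 \<le> S" and Dl: "0 \<le> Dl"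
    and A: "\<And>s. 1 \<le> s \<Longrightarrow> A s \<le> ((1 - b2)\<^sup>2) ^ (s - 1) + b2 / (2 - b2)"
  shows "S + (\<Sum>s\<in>{1..<T}. (1 + (1 - b1)\<^sup>2 / 6) * ((1 - b1)\<^sup>2 * A s + b1\<^sup>2) * S + ((1 - b1)\<^sup>2 + 6) * (9 / 4 * Dl))
         \<le> real T * (2 * S / (b2 * real T) + 16 * Dl + 2 * b2 * S)"
proof -
  define u where "u = 1 - b1"
  define c where "c = 1 + u\<^sup>2 / 6"
  define q where "q = (1 - b2)\<^sup>2"
  have u: "0 \<le> u" "u \<le> 1" using b1 unfolding u_def by auto
  have u2: "u\<^sup>2 \<le> 1" using u by (simp add: power_le_one)
  have c: "0 \<le> c" unfolding c_def by (simp add: add_nonneg_nonneg)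
  have "(1 - b2) * (1 - b2) \<le> (1 - b2) * 1" using b2 by (intro mult_left_mono) auto
  then have q: "0 \<le> q" "q < 1" unfolding q_def using b2 by (auto simp: power2_eq_square)
  have oneq: "1 - q = b2 * (2 - b2)" unfolding q_def by (simp add: power2_eq_square algebra_simps)
  have c2: "c * (u\<^sup>2 * (b2 / (2 - b2)) + b1\<^sup>2) \<le> 2 * b2"
    using cond2[OF b1 b2 b12] unfolding c_def u_def .
  have tm: "c * (u\<^sup>2 * A s + b1\<^sup>2) * S + (u\<^sup>2 + 6) * (9 / 4 * Dl)
      \<le> c * u\<^sup>2 * S * q ^ (s - 1) + (2 * b2 * S + 16 * Dl)" if s: "1 \<le> s" for s
  proof -
    have "c * (u\<^sup>2 * A s + b1\<^sup>2) * S \<le> c * (u\<^sup>2 * (q ^ (s - 1) + b2 / (2 - b2)) + b1\<^sup>2) * S"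
      using A[OF s] c S unfolding q_def
      by (intro mult_right_mono mult_left_mono add_right_mono) auto
    also have "\<dots> = c * u\<^sup>2 * S * q ^ (s - 1) + c * (u\<^sup>2 * (b2 / (2 - b2)) + b1\<^sup>2) * S"
      by (simp add: algebra_simps)
    also have "\<dots> \<le> c * u\<^sup>2 * S * q ^ (s - 1) + 2 * b2 * S"
      using c2 S by (intro add_left_mono mult_right_mono) auto
    finally have 1: "c * (u\<^sup>2 * A s + b1\<^sup>2) * S \<le> c * u\<^sup>2 * S * q ^ (s - 1) + 2 * b2 * S" .
    have 2: "(u\<^sup>2 + 6) * (9 / 4 * Dl) \<le> 16 * Dl"
    proof -
      have "(u\<^sup>2 + 6) * (9 / 4 * Dl) \<le> 7 * (9 / 4 * Dl)" by (rule mult_right_mono) (use u2 Dl in auto)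
      then show ?thesis using Dl by linarith
    qed
    show ?thesis using 1 2 by simp
  qed
  have "(\<Sum>s\<in>{1..<T}. c * (u\<^sup>2 * A s + b1\<^sup>2) * S + (u\<^sup>2 + 6) * (9 / 4 * Dl))
      \<le> (\<Sum>s\<in>{1..<T}. c * u\<^sup>2 * S * q ^ (s - 1) + (2 * b2 * S + 16 * Dl))"
    by (intro sum_mono tm) auto
  also have "\<dots> = c * u\<^sup>2 * S * (\<Sum>s\<in>{1..<T}. q ^ (s - 1)) + real (T - 1) * (2 * b2 * S + 16 * Dl)"
    by (simp add: sum.distrib sum_distrib_left)
  also have "\<dots> \<le> c * u\<^sup>2 * S / (b2 * (2 - b2)) + real T * (2 * b2 * S + 16 * Dl)"
  proof (intro add_mono)
    have g: "(\<Sum>s\<in>{1..<T}. q ^ (s - 1)) \<le> 1 / (1 - q)"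
    proof -
      have "(1 - q) * (\<Sum>s\<in>{1..<T}. q ^ (s - 1)) \<le> 1" using geo_sum[OF T, of q] q by simp
      then show ?thesis using q by (simp add: field_simps mult.commute)
    qed
    have "0 \<le> c * u\<^sup>2 * S" using c S by simp
    then have "c * u\<^sup>2 * S * (\<Sum>s\<in>{1..<T}. q ^ (s - 1)) \<le> c * u\<^sup>2 * S * (1 / (1 - q))"
      by (rule mult_left_mono[OF g])
    then show "c * u\<^sup>2 * S * (\<Sum>s\<in>{1..<T}. q ^ (s - 1)) \<le> c * u\<^sup>2 * S / (b2 * (2 - b2))"
      by (simp add: oneq)
    show "real (T - 1) * (2 * b2 * S + 16 * Dl) \<le> real T * (2 * b2 * S + 16 * Dl)"
      using b2 S Dl by (intro mult_right_mono) auto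
  qed
  finally have sm: "(\<Sum>s\<in>{1..<T}. c * (u\<^sup>2 * A s + b1\<^sup>2) * S + (u\<^sup>2 + 6) * (9 / 4 * Dl))
      \<le> c * u\<^sup>2 * S / (b2 * (2 - b2)) + real T * (2 * b2 * S + 16 * Dl)" .
  have c1: "S * (1 + c * u\<^sup>2 / (b2 * (2 - b2))) \<le> S * (2 / b2)"
    using cond1[OF b1 b2 b12(1)] S unfolding c_def u_def by (intro mult_left_mono) auto
  have "S + (\<Sum>s\<in>{1..<T}. c * (u\<^sup>2 * A s + b1\<^sup>2) * S + (u\<^sup>2 + 6) * (9 / 4 * Dl))
      \<le> S * (1 + c * u\<^sup>2 / (b2 * (2 - b2))) + real T * (2 * b2 * S + 16 * Dl)"
    using sm by (simp add: algebra_simps)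
  also have "\<dots> \<le> S * (2 / b2) + real T * (2 * b2 * S + 16 * Dl)" using c1 by simp
  also have "\<dots> = real T * (2 * S / (b2 * real T) + 16 * Dl + 2 * b2 * S)"
    using T b2 by (simp add: field_simps)
  finally show ?thesis unfolding c_def u_def .
qed

lemma nn_sum_bound:
  fixes g :: "nat \<Rightarrow> 'a \<Rightarrow> real"
  assumes S: "finite S" and a: "0 \<le> a"
    and gm: "\<And>t. t \<in> S \<Longrightarrow> g t \<in> borel_measurable N"
    and gn: "\<And>t x. t \<in> S \<Longrightarrow> 0 \<le> g t x"
    and gb: "\<And>t. t \<in> S \<Longrightarrow> (\<integral>\<^sup>+x. ennreal (g t x) \<partial>N) \<le> ennreal (B t)"
    and Bn: "\<And>t. t \<in> S \<Longrightarrow> 0 \<le> B t"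
  shows "(\<integral>\<^sup>+x. ennreal (a * (\<Sum>t\<in>S. g t x)) \<partial>N) \<le> ennreal (a * (\<Sum>t\<in>S. B t))"
proof -
  have "(\<integral>\<^sup>+x. ennreal (a * (\<Sum>t\<in>S. g t x)) \<partial>N) = (\<integral>\<^sup>+x. ennreal a * (\<Sum>t\<in>S. ennreal (g t x)) \<partial>N)"
    using gn a by (intro nn_integral_cong) (simp add: ennreal_mult sum_nonneg)
  also have "\<dots> = ennreal a * (\<integral>\<^sup>+x. (\<Sum>t\<in>S. ennreal (g t x)) \<partial>N)"
    using gm by (intro nn_integral_cmult) auto
  also have "(\<integral>\<^sup>+x. (\<Sum>t\<in>S. ennreal (g t x)) \<partial>N) = (\<Sum>t\<in>S. \<integral>\<^sup>+x. ennreal (g t x) \<partial>N)"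
    using gm by (intro nn_integral_sum) auto
  also have "\<dots> \<le> (\<Sum>t\<in>S. ennreal (B t))" using gb by (intro sum_mono) auto
  also have "\<dots> = ennreal (\<Sum>t\<in>S. B t)" using Bn by simp
  finally show ?thesis using a Bn
    by (simp add: ennreal_mult[symmetric] sum_nonneg mult_left_mono del: ennreal_mult')
qed

lemma split_sum:
  fixes F :: "nat \<Rightarrow> 'a::comm_monoid_add"
  assumes "Suc s \<le> T" "\<And>r. Suc s < r \<Longrightarrow> F r = 0"
  shows "(\<Sum>r\<in>{1..T}. F r) = (\<Sum>r\<in>{1..s}. F r) + F (Suc s)"
proof -
  have "(\<Sum>r\<in>{1..T}. F r) = (\<Sum>r\<in>{1..Suc s}. F r)"
    by (rule sum.mono_neutral_right) (use assms in auto)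
  also have "\<dots> = (\<Sum>r\<in>{1..s}. F r) + F (Suc s)" by (simp add: sum.cl_ivl_Suc)
  finally show ?thesis .
qed

lemma sum_shift1:
  fixes g :: "nat \<Rightarrow> 'a::comm_monoid_add"
  assumes "1 \<le> T"
  shows "(\<Sum>t\<in>{1..T}. g t) = g 1 + (\<Sum>s\<in>{1..<T}. g (Suc s))"
  using assms
proof (induction T rule: dec_induct)
  case base then show ?case by simp
next
  case (step T)
  then show ?case by (simp add: sum.cl_ivl_Suc sum.atLeastLessThan_Suc add.assoc)
qed

context
  fixes M :: "'w measure"
    and D :: "nat \<Rightarrow> 's measure"
    and xi :: "nat \<Rightarrow> nat \<Rightarrow> 'w \<Rightarrow> 's"
    and f :: "nat \<Rightarrow> real^'d \<Rightarrow> real"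
    and gradf :: "nat \<Rightarrow> real^'d \<Rightarrow> real^'d"
    and G :: "nat \<Rightarrow> real^'d \<Rightarrow> 's \<Rightarrow> real^'d"
    and n T :: nat
    and L sigma b1 b2 eta lam :: real
    and x1 :: "real^'d"
  assumes M: "prob_space M"
    and D: "\<And>j. j \<in> {1..n} \<Longrightarrow> prob_space (D j)"
    and n: "n \<ge> 1" and T: "T \<ge> 1"
    and xi_meas: "\<And>t j. t \<ge> 1 \<Longrightarrow> j \<in> {1..n} \<Longrightarrow> xi t j \<in> measurable M (D j)"
    and xi_distr: "\<And>t j. t \<ge> 1 \<Longrightarrow> j \<in> {1..n} \<Longrightarrow> distr M (D j) (xi t j) = D j"
    and xi_indep: "prob_space.indep_vars M (\<lambda>(t, j). D j) (\<lambda>(t, j). xi t j)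
                     {(t, j). t \<ge> 1 \<and> j \<in> {1..n}}"
    and D1: "\<And>j x y. j \<in> {1..n} \<Longrightarrow> norm (gradf j x - gradf j y) \<le> L * norm (x - y)"
    and G_meas: "\<And>j. j \<in> {1..n} \<Longrightarrow>
                   (\<lambda>(x, s). G j x s) \<in> borel_measurable (borel \<Otimes>\<^sub>M D j)"
    and D3_int: "\<And>j x. j \<in> {1..n} \<Longrightarrow> integrable (D j) (G j x)"
    and D3_unbiased: "\<And>j x. j \<in> {1..n} \<Longrightarrow> (\<integral>s. G j x s \<partial>D j) = gradf j x"
    and D3_var: "\<And>j x. j \<in> {1..n} \<Longrightarrow>
                   (\<integral>\<^sup>+s. ennreal ((norm (G j x s - gradf j x))\<^sup>2) \<partial>D j) \<le> ennreal (sigma\<^sup>2)"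
    and b1: "0 < b1" "b1 \<le> 1" and b2: "0 < b2" "b2 \<le> 1"
    and b12: "b2\<^sup>2 \<le> b1" "b1 \<le> sqrt b2"
    and eta: "eta > 0"
    and lam: "0 \<le> lam" "lam \<le> 1 / (2 * eta * real T)"
    and x1: "infnorm x1 \<le> eta"
begin

definition "Mi = (\<lambda>(t::nat, j::nat). D (if j \<in> {1..n} then j else 1))"

lemma Mi_eq: "j \<in> {1..n} \<Longrightarrow> Mi (t, j) = D j"
  unfolding Mi_def by simp

lemma Mi_prob: "prob_space (Mi i)"
  using D n unfolding Mi_def by (cases i) auto

definition "II = {1..T} \<times> {1..n}"

abbreviation "XP w t \<equiv> xx G n b1 b2 eta lam x1 (\<lambda>r j. w (r, j)) t"
abbreviation "MP w t j \<equiv> mm G n b1 b2 eta lam x1 (\<lambda>r j. w (r, j)) t j"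
abbreviation "VP w t j \<equiv> vv G n b1 b2 eta lam x1 (\<lambda>r j. w (r, j)) t j"

lemma Gcomp:
  assumes fm: "h \<in> borel_measurable (PiM II Mi)" and rj: "(r, j) \<in> II"
  shows "(\<lambda>w. G j (h w) (w (r, j))) \<in> borel_measurable (PiM II Mi)"
proof -
  have j: "j \<in> {1..n}" using rj unfolding II_def by auto
  have c: "(\<lambda>w. w (r, j)) \<in> measurable (PiM II Mi) (D j)"
    using measurable_component_singleton[OF rj, of Mi] Mi_eq[OF j] by simp
  have "(\<lambda>w. (h w, w (r, j))) \<in> measurable (PiM II Mi) (borel \<Otimes>\<^sub>M D j)"
    using fm c by (rule measurable_Pair)
  from measurable_compose[OF this G_meas[OF j]] show ?thesis by simp
qed

lemma proc_meas:
  "t \<le> T \<Longrightarrow> (\<lambda>w. XP w (Suc t)) \<in> borel_measurable (PiM II Mi) \<and>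
     (1 \<le> t \<longrightarrow> (\<forall>j\<in>{1..n}. (\<lambda>w. MP w t j) \<in> borel_measurable (PiM II Mi) \<and>
                               (\<lambda>w. VP w t j) \<in> borel_measurable (PiM II Mi)))"
proof (induction t)
  case 0
  then show ?case by (simp add: xx_1)
next
  case (Suc t)
  then have IH: "(\<lambda>w. XP w (Suc t)) \<in> borel_measurable (PiM II Mi)"
    "1 \<le> t \<Longrightarrow> j \<in> {1..n} \<Longrightarrow> (\<lambda>w. MP w t j) \<in> borel_measurable (PiM II Mi)" for j
    by auto
  have mv: "(\<lambda>w. MP w (Suc t) j) \<in> borel_measurable (PiM II Mi) \<and>
            (\<lambda>w. VP w (Suc t) j) \<in> borel_measurable (PiM II Mi)" if j: "j \<in> {1..n}" for j
  proof -
    have rj: "(Suc t, j) \<in> II" using j Suc.prems unfolding II_def by auto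
    have g: "(\<lambda>w. G j (XP w (Suc t)) (w (Suc t, j))) \<in> borel_measurable (PiM II Mi)"
      by (rule Gcomp[OF IH(1) rj])
    show ?thesis
    proof (cases "t = 0")
      case True
      have g1: "(\<lambda>w. G j x1 (w (Suc 0, j))) \<in> borel_measurable (PiM II Mi)"
        using Gcomp[OF measurable_const rj] True by simp
      then show ?thesis using True by (simp add: mm_1 vv_1)
    next
      case False
      then have "1 \<le> t" by simp
      then show ?thesis using g IH(2)[OF _ j] by (simp add: mm_Suc vv_Suc)
    qed
  qed
  have "(\<lambda>w. XP w (Suc (Suc t))) = (\<lambda>w. XP w (Suc t) - eta *\<^sub>R (vsign (\<Sum>j\<in>{1..n}. VP w (Suc t) j) + lam *\<^sub>R XP w (Suc t)))"
    by (simp add: xx_Suc)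
  moreover have "\<dots> \<in> borel_measurable (PiM II Mi)"
    using IH(1) mv by (intro borel_measurable_diff borel_measurable_scaleR borel_measurable_add
        measurable_compose[OF _ vsign_meas] borel_measurable_sum measurable_const) auto
  ultimately show ?case using mv by simp
qed


lemma L_nonneg: "0 \<le> L"
proof -
  obtain a :: 'd where True by simp
  have "norm (gradf 1 0 - gradf 1 (axis a 1)) \<le> L * norm (0 - axis a (1::real))"
    using D1[of 1 0 "axis a 1"] n by auto
  moreover have "norm (0 - axis a (1::real)) = 1" by simp
  moreover have "0 \<le> norm (gradf 1 0 - gradf 1 (axis a 1))" by simp
  ultimately show ?thesis by (metis mult.right_neutral order_trans)
qed

lemma gradf_meas:
  assumes j: "j \<in> {1..n}" shows "gradf j \<in> borel_measurable borel"
proof -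
  have "L-lipschitz_on UNIV (gradf j)"
    unfolding lipschitz_on_def dist_norm using L_nonneg D1[OF j] by blast
  then show ?thesis by (intro borel_measurable_continuous_onI lipschitz_on_continuous_on)
qed

definition "idx k = (k div n + 1, k mod n + 1)"
definition "ee k w = G (snd (idx k)) (XP w (fst (idx k))) (w (idx k))
                     - gradf (snd (idx k)) (XP w (fst (idx k)))"

lemma idx_in: "k < T * n \<Longrightarrow> idx k \<in> II"
  using idx_img[OF n, of T] unfolding idx_def II_def by blast

lemma idx_snd: "snd (idx k) \<in> {1..n}"
  using n unfolding idx_def by (auto simp: Suc_le_eq)

lemma idx_prev:
  assumes "1 \<le> r" "r < fst (idx k)" "j \<in> {1..n}"
  shows "\<exists>l\<le>k. idx l = (r, j)"
proof -
  obtain q m where qm: "r = Suc q" "j = Suc m" using assms(1,3) by (metis One_nat_def Suc_le_D atLeastAtMost_iff)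
  have mn: "m < n" using assms(3) qm by auto
  define l where "l = q * n + m"
  have "idx l = (r, j)" using idx_inv[OF mn] unfolding idx_def l_def qm by auto
  moreover have "l \<le> k"
  proof -
    have q: "Suc q \<le> k div n" using assms(2) qm unfolding idx_def by auto
    have "l < q * n + n" unfolding l_def using mn by auto
    also have "\<dots> = Suc q * n" by simp
    also have "\<dots> \<le> (k div n) * n" using q by (rule mult_right_mono) simp
    also have "\<dots> \<le> k" by (rule div_times_less_eq_dividend)
    finally show ?thesis by simp
  qed
  ultimately show ?thesis by blast
qed

lemma XP_dep:
  assumes "\<And>r j. 1 \<le> r \<Longrightarrow> r < fst (idx k) \<Longrightarrow> j \<in> {1..n} \<Longrightarrow> w (r, j) = w' (r, j)"
  shows "XP w (fst (idx k)) = XP w' (fst (idx k))"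
  by (rule dep_xx) (use assms in \<open>auto simp: idx_def\<close>)

lemma ee_dep:
  assumes "\<And>l. l \<le> k \<Longrightarrow> w (idx l) = w' (idx l)"
  shows "ee k w = ee k w'"
proof -
  have "XP w (fst (idx k)) = XP w' (fst (idx k))"
    by (rule XP_dep) (metis assms idx_prev)
  then show ?thesis unfolding ee_def using assms[of k] by simp
qed

lemma ee_meas_full:
  assumes "k < T * n"
  shows "ee k \<in> borel_measurable (PiM II Mi)"
proof -
  have "k div n \<le> (T * n) div n" using assms by (intro div_le_mono) simp
  then have kT: "k div n \<le> T" using n by simp
  have x: "(\<lambda>w. XP w (fst (idx k))) \<in> borel_measurable (PiM II Mi)"
    using proc_meas[OF kT] unfolding idx_def by simp
  have g: "(\<lambda>w. G (snd (idx k)) (XP w (fst (idx k))) (w (idx k))) \<in> borel_measurable (PiM II Mi)"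
    using Gcomp[OF x, of "fst (idx k)" "snd (idx k)"] idx_in[OF assms] by simp
  have h: "(\<lambda>w. gradf (snd (idx k)) (XP w (fst (idx k)))) \<in> borel_measurable (PiM II Mi)"
    using measurable_compose[OF x gradf_meas[OF idx_snd]] .
  show ?thesis unfolding ee_def using g h by (intro borel_measurable_diff)
qed

lemma ee_meas:
  assumes "k < m" "m \<le> T * n"
  shows "ee k \<in> borel_measurable (PiM (idx ` {..<m}) Mi)"
proof (rule meas_restrict_dep[OF ee_meas_full])
  show "k < T * n" using assms by simp
  show "idx ` {..<m} \<subseteq> II" using idx_in assms by auto
  show "\<And>i. i \<in> II \<Longrightarrow> space (Mi i) \<noteq> {}" using Mi_prob prob_space.not_empty by blast
  show "\<And>w w'. (\<And>i. i \<in> idx ` {..<m} \<Longrightarrow> w i = w' i) \<Longrightarrow> ee k w = ee k w'"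
    by (rule ee_dep) (use assms in auto)
qed

lemma ee_upd:
  "ee k (w(idx k := y)) = G (snd (idx k)) (XP w (fst (idx k))) y - gradf (snd (idx k)) (XP w (fst (idx k)))"
proof -
  have "XP (w(idx k := y)) (fst (idx k)) = XP w (fst (idx k))"
    by (rule XP_dep) (auto simp: idx_def)
  then show ?thesis unfolding ee_def by simp
qed

lemma noise_bound:
  fixes c :: "nat \<Rightarrow> real"
  shows "(\<integral>\<^sup>+w. ennreal ((norm (\<Sum>s\<in>{1..T}. c s *\<^sub>R eps G n b1 b2 eta lam x1 gradf (\<lambda>r j. w (r, j)) s))\<^sup>2) \<partial>PiM II Mi)
         \<le> ennreal ((\<Sum>s\<in>{1..T}. (c s)\<^sup>2) * (sigma\<^sup>2 / real n))"
proof -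
  define a where "a k = c (fst (idx k)) / real n" for k
  have img: "idx ` {..<T * n} = II" using idx_img[OF n, of T] unfolding idx_def II_def by simp
  have main: "(\<integral>\<^sup>+w. ennreal ((norm (\<Sum>l<T * n. a l *\<^sub>R ee l w))\<^sup>2) \<partial>PiM (idx ` {..<T * n}) Mi)
           \<le> ennreal ((\<Sum>l<T * n. (a l)\<^sup>2) * sigma\<^sup>2)"
  proof (rule noise_sum[where Kmax = "T * n"])
    show "\<And>i. prob_space (Mi i)" by (rule Mi_prob)
    show "inj idx" using idx_inj unfolding idx_def[abs_def] .
    show "\<And>k m. k < m \<Longrightarrow> m \<le> T * n \<Longrightarrow> ee k \<in> borel_measurable (PiM (idx ` {..<m}) Mi)"
      by (rule ee_meas)
    show "\<And>k w w'. (\<And>l. l \<le> k \<Longrightarrow> w (idx l) = w' (idx l)) \<Longrightarrow> ee k w = ee k w'"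
      by (rule ee_dep)
    fix k w assume k: "k < T * n"
    have mk: "Mi (idx k) = D (snd (idx k))" using Mi_eq[OF idx_snd] by (metis prod.collapse)
    interpret Dj: prob_space "D (snd (idx k))" using D idx_snd by blast
    show "integrable (Mi (idx k)) (\<lambda>y. ee k (w(idx k := y)))"
      unfolding ee_upd mk using D3_int[OF idx_snd] by simp
    show "(\<integral>y. ee k (w(idx k := y)) \<partial>Mi (idx k)) = 0"
      unfolding ee_upd mk using D3_int[OF idx_snd] D3_unbiased[OF idx_snd]
      by (subst Bochner_Integration.integral_diff) (auto simp: Dj.prob_space)
    show "(\<integral>\<^sup>+y. ennreal ((norm (ee k (w(idx k := y))))\<^sup>2) \<partial>Mi (idx k)) \<le> ennreal (sigma\<^sup>2)"
      unfolding ee_upd mk using idx_snd[of k] by (rule D3_var)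
  qed auto
  have e1: "(\<Sum>l<T * n. a l *\<^sub>R ee l w) = (\<Sum>s\<in>{1..T}. c s *\<^sub>R eps G n b1 b2 eta lam x1 gradf (\<lambda>r j. w (r, j)) s)" for w
  proof -
    have "(\<Sum>l<T * n. a l *\<^sub>R ee l w) = (\<Sum>s\<in>{1..T}. \<Sum>j\<in>{1..n}. (c s / real n) *\<^sub>R (G j (XP w s) (w (s, j)) - gradf j (XP w s)))"
      using sum_idx[OF n, where T=T and h="\<lambda>(s, j). (c s / real n) *\<^sub>R (G j (XP w s) (w (s, j)) - gradf j (XP w s))"]
      unfolding a_def ee_def idx_def by simp
    also have "\<dots> = (\<Sum>s\<in>{1..T}. c s *\<^sub>R eps G n b1 b2 eta lam x1 gradf (\<lambda>r j. w (r, j)) s)"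
      unfolding eps_def by (simp add: scaleR_sum_right)
    finally show ?thesis .
  qed
  have e2: "(\<Sum>l<T * n. (a l)\<^sup>2) * sigma\<^sup>2 = (\<Sum>s\<in>{1..T}. (c s)\<^sup>2) * (sigma\<^sup>2 / real n)"
  proof -
    have "(\<Sum>l<T * n. (a l)\<^sup>2) = (\<Sum>s\<in>{1..T}. \<Sum>j\<in>{1..n}. (c s / real n)\<^sup>2)"
      using sum_idx[OF n, where T=T and h="\<lambda>(s, j). (c s / real n)\<^sup>2"] unfolding a_def idx_def by simp
    also have "\<dots> = (\<Sum>s\<in>{1..T}. (c s)\<^sup>2 / real n)"
      using n by (simp add: power_divide power2_eq_square)
    finally show ?thesis by (simp add: sum_divide_distrib[symmetric] sum_distrib_right)
  qed
  show ?thesis using main unfolding e1 e2 img .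
qed



abbreviation "EP w s \<equiv> eps G n b1 b2 eta lam x1 gradf (\<lambda>r j. w (r, j)) s"

lemma eps_meas:
  assumes s: "1 \<le> s" "s \<le> T"
  shows "(\<lambda>w. EP w s) \<in> borel_measurable (PiM II Mi)"
proof -
  have s1: "s - 1 \<le> T" using s by simp
  have x: "(\<lambda>w. XP w s) \<in> borel_measurable (PiM II Mi)"
    using proc_meas[OF s1] s by simp
  have "(\<lambda>w. (1 / real n) *\<^sub>R (\<Sum>j\<in>{1..n}. G j (XP w s) (w (s, j)) - gradf j (XP w s))) \<in> borel_measurable (PiM II Mi)"
  proof (intro borel_measurable_scaleR measurable_const borel_measurable_sum borel_measurable_diff)
    fix j assume j: "j \<in> {1..n}"
    show "(\<lambda>w. G j (XP w s) (w (s, j))) \<in> borel_measurable (PiM II Mi)"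
      using Gcomp[OF x, of s j] j s unfolding II_def by auto
    show "(\<lambda>w. gradf j (XP w s)) \<in> borel_measurable (PiM II Mi)"
      using measurable_compose[OF x gradf_meas[OF j]] .
  qed auto
  then show ?thesis unfolding eps_def .
qed

lemma per_t_gen:
  fixes beta :: "nat \<Rightarrow> real" and c K :: real
  assumes c: "0 \<le> c" and K: "0 \<le> K"
  shows "(\<integral>\<^sup>+w. ennreal ((1 + c) * (norm (\<Sum>r\<in>{1..T}. beta r *\<^sub>R EP w r))\<^sup>2 + K) \<partial>PiM II Mi)
       \<le> ennreal ((1 + c) * ((\<Sum>r\<in>{1..T}. (beta r)\<^sup>2) * (sigma\<^sup>2 / real n)) + K)"
proof -
  interpret P: prob_space "PiM II Mi" using Mi_prob by (intro prob_space_PiM) auto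
  have m: "(\<lambda>w. ennreal ((norm (\<Sum>r\<in>{1..T}. beta r *\<^sub>R EP w r))\<^sup>2)) \<in> borel_measurable (PiM II Mi)"
    using eps_meas by (intro measurable_compose[OF _ measurable_ennreal] borel_measurable_power
        borel_measurable_norm borel_measurable_sum borel_measurable_scaleR measurable_const) auto
  have "(\<integral>\<^sup>+w. ennreal ((1 + c) * (norm (\<Sum>r\<in>{1..T}. beta r *\<^sub>R EP w r))\<^sup>2 + K) \<partial>PiM II Mi)
      = (\<integral>\<^sup>+w. ennreal (1 + c) * ennreal ((norm (\<Sum>r\<in>{1..T}. beta r *\<^sub>R EP w r))\<^sup>2) + ennreal K \<partial>PiM II Mi)"
    using c K by (intro nn_integral_cong) (simp add: ennreal_plus ennreal_mult)
  also have "\<dots> = ennreal (1 + c) * (\<integral>\<^sup>+w. ennreal ((norm (\<Sum>r\<in>{1..T}. beta r *\<^sub>R EP w r))\<^sup>2) \<partial>PiM II Mi) + ennreal K"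
    using m by (simp add: nn_integral_add nn_integral_cmult P.emeasure_space_1)
  also have "\<dots> \<le> ennreal (1 + c) * ennreal ((\<Sum>r\<in>{1..T}. (beta r)\<^sup>2) * (sigma\<^sup>2 / real n)) + ennreal K"
    by (intro add_right_mono mult_left_mono noise_bound) auto
  also have "\<dots> = ennreal ((1 + c) * ((\<Sum>r\<in>{1..T}. (beta r)\<^sup>2) * (sigma\<^sup>2 / real n)) + K)"
  proof -
    have X: "0 \<le> (\<Sum>r\<in>{1..T}. (beta r)\<^sup>2) * (sigma\<^sup>2 / real n)" by (simp add: sum_nonneg)
    have c1: "0 \<le> 1 + c" using c by simp
    have "ennreal (1 + c) * ennreal ((\<Sum>r\<in>{1..T}. (beta r)\<^sup>2) * (sigma\<^sup>2 / real n))
        = ennreal ((1 + c) * ((\<Sum>r\<in>{1..T}. (beta r)\<^sup>2) * (sigma\<^sup>2 / real n)))"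
      by (rule ennreal_mult[OF c1 X, symmetric])
    moreover have "0 \<le> (1 + c) * ((\<Sum>r\<in>{1..T}. (beta r)\<^sup>2) * (sigma\<^sup>2 / real n))"
      using c1 X by (rule mult_nonneg_nonneg)
    ultimately show ?thesis using K by (simp only: ennreal_plus)
  qed
  finally show ?thesis .
qed


definition "dlt = L * eta * (3 / 2) * sqrt (real CARD('d))"

definition "beta t r = (if t = 1 then (if r = 1 then 1 else 0)
    else if r \<le> t - 1 then (1 - b1) * alpha b2 (t - 1) r else if r = t then b1 else 0)"
definition "cc t = (if t = (1::nat) then 0 else (1 - b1)\<^sup>2 / 6)"
definition "KK t = (if t = (1::nat) then 0 else ((1 - b1)\<^sup>2 + 6) * (dlt / b2)\<^sup>2)"

abbreviation "WP w t \<equiv> W G n b1 b2 eta lam x1 gradf (\<lambda>r j. w (r, j)) t"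

lemma W_pt:
  assumes t: "t \<in> {1..T}"
  shows "(norm (WP w t))\<^sup>2 \<le> (1 + cc t) * (norm (\<Sum>r\<in>{1..T}. beta t r *\<^sub>R EP w r))\<^sup>2 + KK t"
proof (cases "t = 1")
  case True
  have "(\<Sum>r\<in>{1..T}. beta t r *\<^sub>R EP w r) = (\<Sum>r\<in>{1..T}. (if r = 1 then EP w r else 0))"
    using True by (intro sum.cong) (auto simp: beta_def)
  also have "\<dots> = EP w 1" using T by (simp add: sum.delta)
  moreover have "WP w 1 = EP w 1" by (rule W_1)
  ultimately show ?thesis using True by (simp add: cc_def KK_def)
next
  case False
  then obtain s where s: "t = Suc s" "1 \<le> s" using t by (cases t) auto
  have sT: "s < T" using t s by auto
  have split: "(\<Sum>r\<in>{1..T}. beta t r *\<^sub>R EP w r)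
      = (1 - b1) *\<^sub>R Nn G n b1 b2 eta lam x1 gradf (\<lambda>r j. w (r, j)) s + b1 *\<^sub>R EP w (Suc s)"
  proof -
    have "(\<Sum>r\<in>{1..T}. beta t r *\<^sub>R EP w r) = (\<Sum>r\<in>{1..s}. beta t r *\<^sub>R EP w r) + beta t (Suc s) *\<^sub>R EP w (Suc s)"
      by (rule split_sum) (use s sT in \<open>auto simp: beta_def\<close>)
    also have "(\<Sum>r\<in>{1..s}. beta t r *\<^sub>R EP w r) = (1 - b1) *\<^sub>R Nn G n b1 b2 eta lam x1 gradf (\<lambda>r j. w (r, j)) s"
      unfolding Nn_def scaleR_sum_right using s by (intro sum.cong) (auto simp: beta_def)
    also have "beta t (Suc s) = b1" using s by (simp add: beta_def)
    finally show ?thesis .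
  qed
  have "(norm (WP w t))\<^sup>2 \<le> (1 + (1 - b1)\<^sup>2 / 6) * (norm ((1 - b1) *\<^sub>R Nn G n b1 b2 eta lam x1 gradf (\<lambda>r j. w (r, j)) s + b1 *\<^sub>R EP w (Suc s)))\<^sup>2
       + ((1 - b1)\<^sup>2 + 6) * (dlt / b2)\<^sup>2"
    unfolding s(1) dlt_def
    using W_path_bound'[where G=G and n=n and ?b1.0=b1 and ?b2.0=b2 and eta=eta and lam=lam and ?x1.0=x1 and gradf=gradf and L=L and T=T and X="\<lambda>r j. w (r, j)" and t=s, OF eta lam x1 T n D1 L_nonneg b2 s(2) sT] b1
    by simp
  then show ?thesis using False unfolding split cc_def KK_def by simp
qed


definition "Bt t = (1 + cc t) * ((\<Sum>r\<in>{1..T}. (beta t r)\<^sup>2) * (sigma\<^sup>2 / real n)) + KK t"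

definition "bound = 2 * sigma\<^sup>2 / (b2 * real n * real T)
                    + 16 * eta\<^sup>2 * L\<^sup>2 * real CARD('d) / b2\<^sup>2
                    + 2 * b2 * sigma\<^sup>2 / real n"

lemma cc_nonneg: "0 \<le> cc t" unfolding cc_def by simp
lemma KK_nonneg: "0 \<le> KK t" unfolding KK_def by simp

lemma Bt_nonneg: "0 \<le> Bt t"
  unfolding Bt_def using cc_nonneg[of t] KK_nonneg[of t]
  by (intro add_nonneg_nonneg mult_nonneg_nonneg) (auto simp: sum_nonneg)

lemma Bt_sum: "(1 / real T) * (\<Sum>t\<in>{1..T}. Bt t) \<le> bound"
proof -
  define S where "S = sigma\<^sup>2 / real n"
  define Dl where "Dl = eta\<^sup>2 * L\<^sup>2 * real CARD('d) / b2\<^sup>2"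
  define A where "A s = (\<Sum>r\<in>{1..s}. (alpha b2 s r)\<^sup>2)" for s
  have S: "0 \<le> S" unfolding S_def by simp
  have Dl: "0 \<le> Dl" unfolding Dl_def by simp
  have B1: "Bt 1 = S"
  proof -
    have "(\<Sum>r\<in>{1..T}. (beta 1 r)\<^sup>2) = (\<Sum>r\<in>{1..T}. (if r = 1 then 1 else 0))"
      by (intro sum.cong) (auto simp: beta_def)
    also have "\<dots> = 1" using T by (simp add: sum.delta)
    finally show ?thesis unfolding Bt_def cc_def KK_def S_def by simp
  qed
  have BS: "Bt (Suc s) = (1 + (1 - b1)\<^sup>2 / 6) * ((1 - b1)\<^sup>2 * A s + b1\<^sup>2) * S + ((1 - b1)\<^sup>2 + 6) * (9 / 4 * Dl)"
    if s: "s \<in> {1..<T}" for s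
  proof -
    have "(\<Sum>r\<in>{1..T}. (beta (Suc s) r)\<^sup>2) = (\<Sum>r\<in>{1..s}. (beta (Suc s) r)\<^sup>2) + (beta (Suc s) (Suc s))\<^sup>2"
      by (rule split_sum) (use s in \<open>auto simp: beta_def\<close>)
    also have "(\<Sum>r\<in>{1..s}. (beta (Suc s) r)\<^sup>2) = (1 - b1)\<^sup>2 * A s"
      unfolding A_def sum_distrib_left using s by (intro sum.cong) (auto simp: beta_def power_mult_distrib)
    also have "beta (Suc s) (Suc s) = b1" using s by (simp add: beta_def)
    finally have e: "(\<Sum>r\<in>{1..T}. (beta (Suc s) r)\<^sup>2) = (1 - b1)\<^sup>2 * A s + b1\<^sup>2" .
    have d: "(dlt / b2)\<^sup>2 = 9 / 4 * Dl"
      unfolding dlt_def Dl_def by (simp add: power_divide power_mult_distrib)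
    show ?thesis unfolding Bt_def cc_def KK_def e d S_def using s by simp
  qed
  have "(\<Sum>t\<in>{1..T}. Bt t) = Bt 1 + (\<Sum>s\<in>{1..<T}. Bt (Suc s))" by (rule sum_shift1[OF T])
  also have "\<dots> = S + (\<Sum>s\<in>{1..<T}. (1 + (1 - b1)\<^sup>2 / 6) * ((1 - b1)\<^sup>2 * A s + b1\<^sup>2) * S + ((1 - b1)\<^sup>2 + 6) * (9 / 4 * Dl))"
    using B1 BS by simp
  also have "\<dots> \<le> real T * (2 * S / (b2 * real T) + 16 * Dl + 2 * b2 * S)"
    by (rule arith_total[OF b1 b2 b12 T S Dl]) (unfold A_def, rule alpha_sq_bound[OF b2])
  finally have "(\<Sum>t\<in>{1..T}. Bt t) \<le> real T * (2 * S / (b2 * real T) + 16 * Dl + 2 * b2 * S)" .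
  then have "(1 / real T) * (\<Sum>t\<in>{1..T}. Bt t) \<le> (1 / real T) * (real T * (2 * S / (b2 * real T) + 16 * Dl + 2 * b2 * S))"
    using T by (intro mult_left_mono) auto
  also have "\<dots> = bound" unfolding bound_def S_def Dl_def using T n by (simp add: field_simps)
  finally show ?thesis .
qed

lemma final_PiM:
  "(\<integral>\<^sup>+w. ennreal ((1 / real T) * (\<Sum>t\<in>{1..T}. (1 + cc t) * (norm (\<Sum>r\<in>{1..T}. beta t r *\<^sub>R EP w r))\<^sup>2 + KK t)) \<partial>PiM II Mi)
     \<le> ennreal bound"
proof -
  have "(\<integral>\<^sup>+w. ennreal ((1 / real T) * (\<Sum>t\<in>{1..T}. (1 + cc t) * (norm (\<Sum>r\<in>{1..T}. beta t r *\<^sub>R EP w r))\<^sup>2 + KK t)) \<partial>PiM II Mi)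
      \<le> ennreal ((1 / real T) * (\<Sum>t\<in>{1..T}. Bt t))"
  proof (rule nn_sum_bound)
    fix t assume t: "t \<in> {1..T}"
    show "(\<lambda>w. (1 + cc t) * (norm (\<Sum>r\<in>{1..T}. beta t r *\<^sub>R EP w r))\<^sup>2 + KK t) \<in> borel_measurable (PiM II Mi)"
      using eps_meas by (intro borel_measurable_add borel_measurable_times measurable_const borel_measurable_power
        borel_measurable_norm borel_measurable_sum borel_measurable_scaleR) auto
    show "\<And>w. 0 \<le> (1 + cc t) * (norm (\<Sum>r\<in>{1..T}. beta t r *\<^sub>R EP w r))\<^sup>2 + KK t"
      using cc_nonneg[of t] KK_nonneg[of t] by simp
    show "(\<integral>\<^sup>+w. ennreal ((1 + cc t) * (norm (\<Sum>r\<in>{1..T}. beta t r *\<^sub>R EP w r))\<^sup>2 + KK t) \<partial>PiM II Mi) \<le> ennreal (Bt t)"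
      unfolding Bt_def by (rule per_t_gen[OF cc_nonneg KK_nonneg])
    show "0 \<le> Bt t" by (rule Bt_nonneg)
  qed auto
  also have "\<dots> \<le> ennreal bound" using Bt_sum by (rule ennreal_leI)
  finally show ?thesis .
qed


lemma main_ctx:
  shows "(\<integral>\<^sup>+\<omega>. ennreal ((1 / real T) * (\<Sum>t\<in>{1..T}.
            (norm ((1 / real n) *\<^sub>R (\<Sum>j\<in>{1..n}.
                      dlion_v G (\<lambda>t j. xi t j \<omega>) n b1 b2 eta lam x1 t j)
                   - (1 / real n) *\<^sub>R (\<Sum>j\<in>{1..n}.
                      gradf j (dlion_x G (\<lambda>t j. xi t j \<omega>) n b1 b2 eta lam x1 t))))\<^sup>2)) \<partial>M)
         \<le> ennreal (2 * sigma\<^sup>2 / (b2 * real n * real T)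
                    + 16 * eta\<^sup>2 * L\<^sup>2 * real CARD('d) / b2\<^sup>2
                    + 2 * b2 * sigma\<^sup>2 / real n)"
proof -
  interpret PM: prob_space M by (rule M)
  define Y where "Y = (\<lambda>x. \<lambda>i\<in>II. (\<lambda>(t, j). xi t j) i x)"
  define gf where "gf w = (1 / real T) * (\<Sum>t\<in>{1..T}. (1 + cc t) * (norm (\<Sum>r\<in>{1..T}. beta t r *\<^sub>R EP w r))\<^sup>2 + KK t)" for w
  have II_sub: "II \<subseteq> {(t, j). t \<ge> 1 \<and> j \<in> {1..n}}" unfolding II_def by auto
  have IIne: "II \<noteq> {}" unfolding II_def using T n by auto
  have rv: "(\<lambda>(t, j). xi t j) i \<in> measurable M ((\<lambda>(t, j). D j) i)" if "i \<in> II" for i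
    using that xi_meas unfolding II_def by (cases i) auto
  have ind: "PM.indep_vars (\<lambda>(t, j). D j) (\<lambda>(t, j). xi t j) II"
    by (rule PM.indep_vars_subset[OF xi_indep II_sub])
  have de: "distr M (PiM II (\<lambda>(t, j). D j)) Y = PiM II (\<lambda>i. distr M ((\<lambda>(t, j). D j) i) ((\<lambda>(t, j). xi t j) i))"
    using PM.indep_vars_iff_distr_eq_PiM'[OF IIne rv] ind unfolding Y_def by simp
  have c1: "PiM II (\<lambda>(t, j). D j) = PiM II Mi"
    by (rule PiM_cong) (auto simp: II_def Mi_eq)
  have c2: "PiM II (\<lambda>i. distr M ((\<lambda>(t, j). D j) i) ((\<lambda>(t, j). xi t j) i)) = PiM II Mi"
    by (rule PiM_cong) (auto simp: II_def Mi_eq xi_distr)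
  have dY: "distr M (PiM II Mi) Y = PiM II Mi" using de c1 c2 by simp
  have Ym: "Y \<in> measurable M (PiM II Mi)"
    unfolding Y_def c1[symmetric] by (rule measurable_restrict) (rule rv)
  have gfm: "(\<lambda>w. ennreal (gf w)) \<in> borel_measurable (PiM II Mi)"
    unfolding gf_def using eps_meas
    by (intro measurable_compose[OF _ measurable_ennreal] borel_measurable_times borel_measurable_sum
        borel_measurable_add measurable_const borel_measurable_power
        borel_measurable_norm borel_measurable_scaleR) auto
  have pt: "(1 / real T) * (\<Sum>t\<in>{1..T}.
            (norm ((1 / real n) *\<^sub>R (\<Sum>j\<in>{1..n}.
                      dlion_v G (\<lambda>t j. xi t j \<omega>) n b1 b2 eta lam x1 t j)
                   - (1 / real n) *\<^sub>R (\<Sum>j\<in>{1..n}.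
                      gradf j (dlion_x G (\<lambda>t j. xi t j \<omega>) n b1 b2 eta lam x1 t))))\<^sup>2) \<le> gf (Y \<omega>)" for \<omega>
  proof -
    have eqt: "(norm ((1 / real n) *\<^sub>R (\<Sum>j\<in>{1..n}. dlion_v G (\<lambda>t j. xi t j \<omega>) n b1 b2 eta lam x1 t j)
                   - (1 / real n) *\<^sub>R (\<Sum>j\<in>{1..n}. gradf j (dlion_x G (\<lambda>t j. xi t j \<omega>) n b1 b2 eta lam x1 t))))\<^sup>2
        = (norm (WP (Y \<omega>) t))\<^sup>2" if t: "t \<in> {1..T}" for t
    proof -
      have agree: "\<And>r j. 1 \<le> r \<Longrightarrow> r \<le> t \<Longrightarrow> j \<in> {1..n} \<Longrightarrow> xi r j \<omega> = Y \<omega> (r, j)"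
        using t unfolding Y_def II_def by auto
      have v: "dlion_v G (\<lambda>t j. xi t j \<omega>) n b1 b2 eta lam x1 t j = VP (Y \<omega>) t j" if j: "j \<in> {1..n}" for j
        unfolding dlion_v_def vv_def[symmetric] st_def[symmetric]
        by (rule dep_vv) (use agree t j in auto)
      have x: "dlion_x G (\<lambda>t j. xi t j \<omega>) n b1 b2 eta lam x1 t = XP (Y \<omega>) t"
        unfolding dlion_x_def xx_def[symmetric] st_def[symmetric]
        by (rule dep_xx) (use agree t in auto)
      show ?thesis unfolding W_def Gr_def using v x by simp
    qed
    have "(1 / real T) * (\<Sum>t\<in>{1..T}. (norm ((1 / real n) *\<^sub>R (\<Sum>j\<in>{1..n}. dlion_v G (\<lambda>t j. xi t j \<omega>) n b1 b2 eta lam x1 t j)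
                   - (1 / real n) *\<^sub>R (\<Sum>j\<in>{1..n}. gradf j (dlion_x G (\<lambda>t j. xi t j \<omega>) n b1 b2 eta lam x1 t))))\<^sup>2)
        = (1 / real T) * (\<Sum>t\<in>{1..T}. (norm (WP (Y \<omega>) t))\<^sup>2)"
      using eqt by simp
    also have "\<dots> \<le> gf (Y \<omega>)" unfolding gf_def
      by (intro mult_left_mono sum_mono W_pt) auto
    finally show ?thesis .
  qed
  have "(\<integral>\<^sup>+\<omega>. ennreal ((1 / real T) * (\<Sum>t\<in>{1..T}.
            (norm ((1 / real n) *\<^sub>R (\<Sum>j\<in>{1..n}.
                      dlion_v G (\<lambda>t j. xi t j \<omega>) n b1 b2 eta lam x1 t j)
                   - (1 / real n) *\<^sub>R (\<Sum>j\<in>{1..n}.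
                      gradf j (dlion_x G (\<lambda>t j. xi t j \<omega>) n b1 b2 eta lam x1 t))))\<^sup>2)) \<partial>M)
      \<le> (\<integral>\<^sup>+\<omega>. ennreal (gf (Y \<omega>)) \<partial>M)"
    by (intro nn_integral_mono ennreal_leI pt)
  also have "\<dots> = (\<integral>\<^sup>+w. ennreal (gf w) \<partial>distr M (PiM II Mi) Y)"
  proof -
    have gfm': "(\<lambda>w. ennreal (gf w)) \<in> borel_measurable (distr M (PiM II Mi) Y)"
      unfolding dY by (rule gfm)
    show ?thesis by (rule nn_integral_distr[OF Ym gfm', symmetric])
  qed
  also have "\<dots> = (\<integral>\<^sup>+w. ennreal (gf w) \<partial>PiM II Mi)" unfolding dY ..
  also have "\<dots> \<le> ennreal bound" unfolding gf_def by (rule final_PiM)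
  finally show ?thesis unfolding bound_def .
qed

end

theorem mainTheorem7:
  fixes M :: "'w measure"
    and D :: "nat \<Rightarrow> 's measure"
    and xi :: "nat \<Rightarrow> nat \<Rightarrow> 'w \<Rightarrow> 's"
    and f :: "nat \<Rightarrow> real^'d \<Rightarrow> real"
    and gradf :: "nat \<Rightarrow> real^'d \<Rightarrow> real^'d"
    and G :: "nat \<Rightarrow> real^'d \<Rightarrow> 's \<Rightarrow> real^'d"
    and n T :: nat
    and L sigma b1 b2 eta lam :: real
    and x1 :: "real^'d"
  assumes M: "prob_space M"
    and D: "\<And>j. j \<in> {1..n} \<Longrightarrow> prob_space (D j)"
    and n: "n \<ge> 1" and T: "T \<ge> 1"
    and xi_meas: "\<And>t j. t \<ge> 1 \<Longrightarrow> j \<in> {1..n} \<Longrightarrow> xi t j \<in> measurable M (D j)"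
    and xi_distr: "\<And>t j. t \<ge> 1 \<Longrightarrow> j \<in> {1..n} \<Longrightarrow> distr M (D j) (xi t j) = D j"
    and xi_indep: "prob_space.indep_vars M (\<lambda>(t, j). D j) (\<lambda>(t, j). xi t j)
                     {(t, j). t \<ge> 1 \<and> j \<in> {1..n}}"
    and grad: "\<And>j x. j \<in> {1..n} \<Longrightarrow> GDERIV (f j) x :> gradf j x"
    and D1: "\<And>j x y. j \<in> {1..n} \<Longrightarrow> norm (gradf j x - gradf j y) \<le> L * norm (x - y)"
    and G_meas: "\<And>j. j \<in> {1..n} \<Longrightarrow>
                   (\<lambda>(x, s). G j x s) \<in> borel_measurable (borel \<Otimes>\<^sub>M D j)"
    and D3_int: "\<And>j x. j \<in> {1..n} \<Longrightarrow> integrable (D j) (G j x)"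
    and D3_unbiased: "\<And>j x. j \<in> {1..n} \<Longrightarrow> (\<integral>s. G j x s \<partial>D j) = gradf j x"
    and D3_var: "\<And>j x. j \<in> {1..n} \<Longrightarrow>
                   (\<integral>\<^sup>+s. ennreal ((norm (G j x s - gradf j x))\<^sup>2) \<partial>D j) \<le> ennreal (sigma\<^sup>2)"
    and b1: "0 < b1" "b1 \<le> 1" and b2: "0 < b2" "b2 \<le> 1"
    and b12: "b2\<^sup>2 \<le> b1" "b1 \<le> sqrt b2"
    and eta: "eta > 0"
    and lam: "0 \<le> lam" "lam \<le> 1 / (2 * eta * real T)"
    and x1: "infnorm x1 \<le> eta"
  shows "(\<integral>\<^sup>+\<omega>. ennreal ((1 / real T) * (\<Sum>t\<in>{1..T}.
            (norm ((1 / real n) *\<^sub>R (\<Sum>j\<in>{1..n}.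
                      dlion_v G (\<lambda>t j. xi t j \<omega>) n b1 b2 eta lam x1 t j)
                   - (1 / real n) *\<^sub>R (\<Sum>j\<in>{1..n}.
                      gradf j (dlion_x G (\<lambda>t j. xi t j \<omega>) n b1 b2 eta lam x1 t))))\<^sup>2)) \<partial>M)
         \<le> ennreal (2 * sigma\<^sup>2 / (b2 * real n * real T)
                    + 16 * eta\<^sup>2 * L\<^sup>2 * real CARD('d) / b2\<^sup>2
                    + 2 * b2 * sigma\<^sup>2 / real n)"
    by (rule main_ctx[OF M D n T xi_meas xi_distr xi_indep D1 G_meas D3_int D3_unbiased D3_var
        b1 b2 b12 eta lam x1])

end
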